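(* Let $\Gamma=(V,E)$ be a finite connected quiver, $k$ a field of characteristic $0$, $n\ge2$, and let $k^n\Gamma$ be the ideal of $k\Gamma$ generated by all paths of length $n$. Let $\mathscr{Q}$ be the set of residue classes of paths of length $\le n-1$ (a basis of $k\Gamma/k^n\Gamma$). Then every $D_{r,\overline{s}}$ with $r\in E$, $\overline{s}\in\mathscr{Q}$, $s\notin V$, $r\parallel\overline{s}$ vanishes on $k^n\Gamma$, and the set $\overline{\mathfrak{B}}_1\cup\overline{\mathfrak{B}}_2$ is a $k$-basis of the space $\mathrm{Diff}(k\Gamma/k^n\Gamma)$ of derivations of $k\Gamma/k^n\Gamma$, where $\overline{\mathfrak{B}}_1=\{\overline{D}_{\overline{s}}\mid\overline{s}\in\mathscr{Q},\ h(\overline{s})\neq t(\overline{s})\}$ and $\overline{\mathfrak{B}}_2=\{\overline{D}_{r,\overline{s}}\mid r\in E,\ \overline{s}\in\mathscr{Q},\ s\notin V,\ r\parallel\overline{s}\}$.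
   Context: For a path $p$, $t(p),h(p)$ are its start and end vertex (vertices are paths of length $0$); paths multiply by left-to-right concatenation (product $0$ if they do not concatenate). $\overline{x}=x+k^n\Gamma$. For $\overline{s}\in\mathscr{Q}$ the class of a path $s$ of length $\le n-1$, $t(\overline{s})=t(s)$, $h(\overline{s})=h(s)$; $r\parallel\overline{s}$ means $t(r)=t(s)$, $h(r)=h(s)$. $\overline{D}_{\overline{s}}$ is the inner derivation $y\mapsto\overline{s}y-y\overline{s}$. $D_{r,\overline{s}}$ is the unique $k$-linear map $k\Gamma\to k\Gamma/k^n\Gamma$ with $D(xy)=D(x)\overline{y}+\overline{x}D(y)$, $D_{r,\overline{s}}(r)=\overline{s}$ and vanishing on all other arrows and vertices; when it vanishes on $k^n\Gamma$, $\overline{D}_{r,\overline{s}}$ is the induced derivation $\overline{x}\mapsto D_{r,\overline{s}}(x)$ of $k\Gamma/k^n\Gamma$. *)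

theory Defs
  imports Main "HOL-Library.FuncSet"
begin

record ('v,'e) quiver =
  verts :: "'v set"
  arcs  :: "'e set"
  qsrc  :: "'e \<Rightarrow> 'v"
  qtgt  :: "'e \<Rightarrow> 'v"

definition finite_quiver :: "('v,'e) quiver \<Rightarrow> bool" where
  "finite_quiver G \<longleftrightarrow> finite (verts G) \<and> finite (arcs G) \<and>
     (\<forall>a\<in>arcs G. qsrc G a \<in> verts G \<and> qtgt G a \<in> verts G)"

definition connected_quiver :: "('v,'e) quiver \<Rightarrow> bool" where
  "connected_quiver G \<longleftrightarrow> verts G \<noteq> {} \<and>
     (\<forall>u\<in>verts G. \<forall>v\<in>verts G.
        (u, v) \<in> ({(qsrc G a, qtgt G a) | a. a \<in> arcs G} \<union> {(qtgt G a, qsrc G a) | a. a \<in> arcs G})\<^sup>*)"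

text \<open>A path is a start vertex together with a (possibly empty) list of composable arrows,
  read left to right.  The path (v, []) is the vertex v (path of length 0).\<close>
type_synonym ('v,'e) path = "'v \<times> 'e list"

fun chain :: "('v,'e) quiver \<Rightarrow> 'v \<Rightarrow> 'e list \<Rightarrow> bool" where
  "chain G v [] = True"
| "chain G v (a # as) = (qsrc G a = v \<and> chain G (qtgt G a) as)"

definition is_path :: "('v,'e) quiver \<Rightarrow> ('v,'e) path \<Rightarrow> bool" where
  "is_path G p \<longleftrightarrow> fst p \<in> verts G \<and> set (snd p) \<subseteq> arcs G \<and> chain G (fst p) (snd p)"

definition pstart :: "('v,'e) path \<Rightarrow> 'v" where
  "pstart p = fst p"

definition pend :: "('v,'e) quiver \<Rightarrow> ('v,'e) path \<Rightarrow> 'v" where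
  "pend G p = (if snd p = [] then fst p else qtgt G (last (snd p)))"

definition plen :: "('v,'e) path \<Rightarrow> nat" where
  "plen p = length (snd p)"

definition vpath :: "'v \<Rightarrow> ('v,'e) path" where
  "vpath v = (v, [])"

definition apath :: "('v,'e) quiver \<Rightarrow> 'e \<Rightarrow> ('v,'e) path" where
  "apath G a = (qsrc G a, [a])"

definition pjoin :: "('v,'e) path \<Rightarrow> ('v,'e) path \<Rightarrow> ('v,'e) path" where
  "pjoin p q = (fst p, snd p @ snd q)"

definition parallel :: "('v,'e) quiver \<Rightarrow> 'e \<Rightarrow> ('v,'e) path \<Rightarrow> bool" where
  "parallel G r s \<longleftrightarrow> qsrc G r = pstart s \<and> qtgt G r = pend G s"

text \<open>Elements of k\<Gamma>: finitely supported k-valued functions on paths.\<close>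
definition supp :: "('a \<Rightarrow> 'k::zero) \<Rightarrow> 'a set" where
  "supp f = {p. f p \<noteq> 0}"

definition PA :: "('v,'e) quiver \<Rightarrow> (('v,'e) path \<Rightarrow> 'k::field) set" where
  "PA G = {f. finite (supp f) \<and> supp f \<subseteq> {p. is_path G p}}"

definition bas :: "('v,'e) path \<Rightarrow> (('v,'e) path \<Rightarrow> 'k::field)" where
  "bas p = (\<lambda>q. if q = p then 1 else 0)"

definition pmul :: "('v,'e) quiver \<Rightarrow> (('v,'e) path \<Rightarrow> 'k::field) \<Rightarrow> (('v,'e) path \<Rightarrow> 'k)
                     \<Rightarrow> (('v,'e) path \<Rightarrow> 'k)" where
  "pmul G f g = (\<lambda>p. \<Sum>(q, r) \<in> supp f \<times> supp g.
                     if pend G q = fst r \<and> pjoin q r = p then f q * g r else 0)"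

inductive_set knG :: "('v,'e) quiver \<Rightarrow> nat \<Rightarrow> (('v,'e) path \<Rightarrow> 'k::field) set"
  for G :: "('v,'e) quiver" and n :: nat where
  gen: "is_path G p \<Longrightarrow> plen p = n \<Longrightarrow> bas p \<in> knG G n"
| zero: "(\<lambda>_. 0) \<in> knG G n"
| add: "x \<in> knG G n \<Longrightarrow> y \<in> knG G n \<Longrightarrow> (\<lambda>p. x p + y p) \<in> knG G n"
| smul: "x \<in> knG G n \<Longrightarrow> (\<lambda>p. c * x p) \<in> knG G n"
| lmul: "a \<in> PA G \<Longrightarrow> x \<in> knG G n \<Longrightarrow> pmul G a x \<in> knG G n"
| rmul: "a \<in> PA G \<Longrightarrow> x \<in> knG G n \<Longrightarrow> pmul G x a \<in> knG G n"

definition coset :: "('v,'e) quiver \<Rightarrow> nat \<Rightarrow> (('v,'e) path \<Rightarrow> 'k::field) \<Rightarrow> (('v,'e) path \<Rightarrow> 'k) set" where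
  "coset G n x = {y \<in> PA G. (\<lambda>p. x p - y p) \<in> knG G n}"

definition QA :: "('v,'e) quiver \<Rightarrow> nat \<Rightarrow> (('v,'e) path \<Rightarrow> 'k::field) set set" where
  "QA G n = coset G n ` PA G"

definition rep :: "'a set \<Rightarrow> 'a" where
  "rep X = (SOME x. x \<in> X)"

definition qzero :: "('v,'e) quiver \<Rightarrow> nat \<Rightarrow> (('v,'e) path \<Rightarrow> 'k::field) set" where
  "qzero G n = coset G n (\<lambda>_. 0)"

definition qadd :: "('v,'e) quiver \<Rightarrow> nat \<Rightarrow> (('v,'e) path \<Rightarrow> 'k::field) set
                    \<Rightarrow> (('v,'e) path \<Rightarrow> 'k) set \<Rightarrow> (('v,'e) path \<Rightarrow> 'k) set" where
  "qadd G n X Y = coset G n (\<lambda>p. rep X p + rep Y p)"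

definition qsmul :: "('v,'e) quiver \<Rightarrow> nat \<Rightarrow> 'k::field
                     \<Rightarrow> (('v,'e) path \<Rightarrow> 'k) set \<Rightarrow> (('v,'e) path \<Rightarrow> 'k) set" where
  "qsmul G n c X = coset G n (\<lambda>p. c * rep X p)"

definition qmul :: "('v,'e) quiver \<Rightarrow> nat \<Rightarrow> (('v,'e) path \<Rightarrow> 'k::field) set
                    \<Rightarrow> (('v,'e) path \<Rightarrow> 'k) set \<Rightarrow> (('v,'e) path \<Rightarrow> 'k) set" where
  "qmul G n X Y = coset G n (pmul G (rep X) (rep Y))"

definition qsum :: "('v,'e) quiver \<Rightarrow> nat \<Rightarrow> 'i set \<Rightarrow> ('i \<Rightarrow> (('v,'e) path \<Rightarrow> 'k::field) set)
                    \<Rightarrow> (('v,'e) path \<Rightarrow> 'k) set" where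
  "qsum G n S F = coset G n (\<lambda>p. \<Sum>i\<in>S. rep (F i) p)"

type_synonym ('v,'e,'k) qelem = "(('v,'e) path \<Rightarrow> 'k) set"

definition Diff :: "('v,'e) quiver \<Rightarrow> nat
                    \<Rightarrow> (('v,'e,'k::field) qelem \<Rightarrow> ('v,'e,'k) qelem) set" where
  "Diff G n = {\<delta>. \<delta> \<in> extensional (QA G n) \<and>
      (\<forall>X\<in>QA G n. \<delta> X \<in> QA G n) \<and>
      (\<forall>X\<in>QA G n. \<forall>Y\<in>QA G n. \<delta> (qadd G n X Y) = qadd G n (\<delta> X) (\<delta> Y)) \<and>
      (\<forall>c. \<forall>X\<in>QA G n. \<delta> (qsmul G n c X) = qsmul G n c (\<delta> X)) \<and>
      (\<forall>X\<in>QA G n. \<forall>Y\<in>QA G n.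
          \<delta> (qmul G n X Y) = qadd G n (qmul G n (\<delta> X) Y) (qmul G n X (\<delta> Y)))}"

definition Dinner :: "('v,'e) quiver \<Rightarrow> nat \<Rightarrow> ('v,'e,'k::field) qelem
                      \<Rightarrow> (('v,'e,'k) qelem \<Rightarrow> ('v,'e,'k) qelem)" where
  "Dinner G n S = restrict
     (\<lambda>Y. qadd G n (qmul G n S Y) (qsmul G n (-1) (qmul G n Y S))) (QA G n)"

definition isDrs :: "('v,'e) quiver \<Rightarrow> nat \<Rightarrow> 'e \<Rightarrow> ('v,'e) path
                     \<Rightarrow> ((('v,'e) path \<Rightarrow> 'k::field) \<Rightarrow> ('v,'e,'k) qelem) \<Rightarrow> bool" where
  "isDrs G n r s D \<longleftrightarrow> D \<in> extensional (PA G) \<and>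
      (\<forall>x\<in>PA G. D x \<in> QA G n) \<and>
      (\<forall>x\<in>PA G. \<forall>y\<in>PA G. D (\<lambda>p. x p + y p) = qadd G n (D x) (D y)) \<and>
      (\<forall>c. \<forall>x\<in>PA G. D (\<lambda>p. c * x p) = qsmul G n c (D x)) \<and>
      (\<forall>x\<in>PA G. \<forall>y\<in>PA G.
          D (pmul G x y) = qadd G n (qmul G n (D x) (coset G n y)) (qmul G n (coset G n x) (D y))) \<and>
      D (bas (apath G r)) = coset G n (bas s) \<and>
      (\<forall>a\<in>arcs G. a \<noteq> r \<longrightarrow> D (bas (apath G a)) = qzero G n) \<and>
      (\<forall>v\<in>verts G. D (bas (vpath v)) = qzero G n)"

definition Drs :: "('v,'e) quiver \<Rightarrow> nat \<Rightarrow> 'e \<Rightarrow> ('v,'e) path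
                   \<Rightarrow> (('v,'e) path \<Rightarrow> 'k::field) \<Rightarrow> ('v,'e,'k) qelem" where
  "Drs G n r s = (THE D. isDrs G n r s D)"

definition Drs_bar :: "('v,'e) quiver \<Rightarrow> nat \<Rightarrow> 'e \<Rightarrow> ('v,'e) path
                   \<Rightarrow> ('v,'e,'k::field) qelem \<Rightarrow> ('v,'e,'k) qelem" where
  "Drs_bar G n r s = restrict (\<lambda>X. Drs G n r s (rep X)) (QA G n)"

definition B1 :: "('v,'e) quiver \<Rightarrow> nat \<Rightarrow> (('v,'e,'k::field) qelem \<Rightarrow> ('v,'e,'k) qelem) set" where
  "B1 G n = {Dinner G n (coset G n (bas s)) | s.
               is_path G s \<and> plen s \<le> n - 1 \<and> pend G s \<noteq> pstart s}"

definition B2 :: "('v,'e) quiver \<Rightarrow> nat \<Rightarrow> (('v,'e,'k::field) qelem \<Rightarrow> ('v,'e,'k) qelem) set" where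
  "B2 G n = {Drs_bar G n r s | r s.
               r \<in> arcs G \<and> is_path G s \<and> plen s \<le> n - 1 \<and> 1 \<le> plen s \<and> parallel G r s}"

definition is_Diff_basis :: "('v,'e) quiver \<Rightarrow> nat
                       \<Rightarrow> (('v,'e,'k::field) qelem \<Rightarrow> ('v,'e,'k) qelem) set \<Rightarrow> bool" where
  "is_Diff_basis G n B \<longleftrightarrow> B \<subseteq> Diff G n \<and>
     (\<forall>\<delta>\<in>Diff G n. \<exists>S c. finite S \<and> S \<subseteq> B \<and>
         (\<forall>X\<in>QA G n. \<delta> X = qsum G n S (\<lambda>D. qsmul G n (c D) (D X)))) \<and>
     (\<forall>S c. finite S \<and> S \<subseteq> B \<and>
         (\<forall>X\<in>QA G n. qsum G n S (\<lambda>D. qsmul G n (c D) (D X)) = qzero G n)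
         \<longrightarrow> (\<forall>D\<in>S. c D = 0))"

end

theory Submission
  imports Defs
begin



section \<open>Paths\<close>

lemma pend_simp: "pend G (v, l) = (if l = [] then v else qtgt G (last l))"
  by (simp add: pend_def)

lemma chain_append: "chain G v (l1 @ l2) \<longleftrightarrow> chain G v l1 \<and> chain G (pend G (v,l1)) l2"
  by (induction l1 arbitrary: v) (auto simp: pend_def)

lemma pend_append: "pend G (v, l1 @ l2) = pend G (pend G (v, l1), l2)"
  by (auto simp: pend_def)

lemma pend_pjoin: "pend G p = fst q \<Longrightarrow> pend G (pjoin p q) = pend G q"
  by (cases p, cases q) (auto simp: pjoin_def pend_def)

lemma fst_pjoin[simp]: "fst (pjoin p q) = fst p" by (simp add: pjoin_def)
lemma snd_pjoin[simp]: "snd (pjoin p q) = snd p @ snd q" by (simp add: pjoin_def)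
lemma plen_pjoin[simp]: "plen (pjoin p q) = plen p + plen q" by (simp add: pjoin_def plen_def)
lemma pjoin_assoc: "pjoin (pjoin p q) r = pjoin p (pjoin q r)" by (simp add: pjoin_def)

lemma is_path_pjoin:
  "is_path G p \<Longrightarrow> is_path G q \<Longrightarrow> pend G p = fst q \<Longrightarrow> is_path G (pjoin p q)"
  by (cases p, cases q) (auto simp: is_path_def pjoin_def chain_append)

lemma is_path_split:
  assumes "is_path G (v, l1 @ l2)" and "finite_quiver G"
  shows "is_path G (v, l1)" "is_path G (pend G (v,l1), l2)"
proof -
  have a: "v \<in> verts G" "set l1 \<subseteq> arcs G" "set l2 \<subseteq> arcs G" "chain G v l1"
    "chain G (pend G (v,l1)) l2"
    using assms(1) by (auto simp: is_path_def chain_append)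
  show "is_path G (v, l1)" using a by (simp add: is_path_def)
  have "pend G (v,l1) \<in> verts G"
    using a assms(2) by (auto simp: pend_def finite_quiver_def dest!: last_in_set)
  then show "is_path G (pend G (v,l1), l2)" using a by (simp add: is_path_def)
qed

lemma finite_short_paths:
  assumes "finite_quiver G"
  shows "finite {p. is_path G p \<and> plen p < m}"
proof -
  have "{p. is_path G p \<and> plen p < m} \<subseteq> verts G \<times> {l. set l \<subseteq> arcs G \<and> length l \<le> m}"
    by (auto simp: is_path_def plen_def)
  moreover have "finite (verts G \<times> {l. set l \<subseteq> arcs G \<and> length l \<le> m})"
    using assms by (auto simp: finite_quiver_def intro: finite_lists_length_le)
  ultimately show ?thesis by (rule finite_subset)
qed

lemma supp_bas[simp]: "supp (bas p :: _ \<Rightarrow> 'k::field) = {p}"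
  by (auto simp: supp_def bas_def)

lemma bas_PA: "is_path G p \<Longrightarrow> (bas p :: _ \<Rightarrow> 'k::field) \<in> PA G"
  by (simp add: PA_def)

lemma zero_PA[simp]: "(\<lambda>_. 0) \<in> PA G" by (simp add: PA_def supp_def)

lemma supp_add: "supp (\<lambda>p. x p + y p) \<subseteq> supp x \<union> supp (y::_\<Rightarrow>'k::field)"
  by (auto simp: supp_def)

lemma supp_smul: "supp (\<lambda>p. c * x p) \<subseteq> supp (x::_\<Rightarrow>'k::field)"
  by (auto simp: supp_def)

lemma supp_sum: "supp (\<lambda>p. \<Sum>i\<in>I. F i p) \<subseteq> (\<Union>i\<in>I. supp (F i :: _\<Rightarrow>'k::field))"
  by (auto simp: supp_def dest: sum.not_neutral_contains_not_neutral)

lemma add_PA: "x \<in> PA G \<Longrightarrow> y \<in> PA G \<Longrightarrow> (\<lambda>p. x p + y p) \<in> PA G"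
  unfolding PA_def using supp_add[of x y] by (auto intro: finite_subset)

lemma smul_PA: "x \<in> PA G \<Longrightarrow> (\<lambda>p. c * x p) \<in> PA G"
  unfolding PA_def using supp_smul[of c x] by (auto intro: finite_subset)

lemma diff_PA: "x \<in> PA G \<Longrightarrow> y \<in> PA G \<Longrightarrow> (\<lambda>p. x p - y p) \<in> PA G"
proof -
  assume "x \<in> PA G" "y \<in> PA G"
  then have "(\<lambda>p. x p + (-1) * y p) \<in> PA G" by (intro add_PA smul_PA)
  then show ?thesis by simp
qed

lemma sum_PA: "finite I \<Longrightarrow> (\<And>i. i \<in> I \<Longrightarrow> F i \<in> PA G) \<Longrightarrow> (\<lambda>p. \<Sum>i\<in>I. F i p) \<in> PA G"
  by (induction I rule: finite_induct) (auto intro: add_PA)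

lemma PA_finite: "x \<in> PA G \<Longrightarrow> finite (supp x)" by (simp add: PA_def)
lemma PA_path: "x \<in> PA G \<Longrightarrow> x p \<noteq> 0 \<Longrightarrow> is_path G p"
  by (auto simp: PA_def supp_def)

lemma expand:
  assumes "finite A" "supp f \<subseteq> A"
  shows "f = (\<lambda>p. \<Sum>q\<in>A. f q * bas q p)"
proof
  fix p
  have "(\<Sum>q\<in>A. f q * bas q p) = (\<Sum>q\<in>A. if q = p then f p else 0)"
    by (rule sum.cong) (auto simp: bas_def)
  also have "\<dots> = f p" using assms by (auto simp: supp_def)
  finally show "f p = (\<Sum>q\<in>A. f q * bas q p)" by simp
qed

lemma pmul_alt:
  fixes f g :: "_ \<Rightarrow> 'k::field"
  assumes "finite A" "finite B" "supp f \<subseteq> A" "supp g \<subseteq> B"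
  shows "pmul G f g p = (\<Sum>(q, r)\<in>A \<times> B. if pend G q = fst r \<and> pjoin q r = p then f q * g r else 0)"
  unfolding pmul_def
  by (rule sum.mono_neutral_left) (use assms in \<open>auto simp: supp_def split: if_splits\<close>)

lemma supp_pmul: "supp (pmul G f (g::_\<Rightarrow>'k::field)) \<subseteq> (\<lambda>(q,r). pjoin q r) ` (supp f \<times> supp g)"
proof
  fix p assume "p \<in> supp (pmul G f g)"
  then have "pmul G f g p \<noteq> 0" by (simp add: supp_def)
  then obtain qr where "qr \<in> supp f \<times> supp g"
    "(\<lambda>(q,r). if pend G q = fst r \<and> pjoin q r = p then f q * g r else 0) qr \<noteq> 0"
    unfolding pmul_def by (rule sum.not_neutral_contains_not_neutral)
  then obtain q r where "(q,r) \<in> supp f \<times> supp g"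
    "(if pend G q = fst r \<and> pjoin q r = p then f q * g r else 0) \<noteq> 0"
    by (cases qr) auto
  then show "p \<in> (\<lambda>(q,r). pjoin q r) ` (supp f \<times> supp g)"
    by (auto split: if_splits)
qed

lemma pmul_nz:
  fixes f g :: "_ \<Rightarrow> 'k::field"
  assumes "pmul G f g p \<noteq> 0"
  shows "\<exists>q r. f q \<noteq> 0 \<and> g r \<noteq> 0 \<and> pend G q = fst r \<and> pjoin q r = p"
proof -
  obtain qr where "qr \<in> supp f \<times> supp g"
    "(\<lambda>(q,r). if pend G q = fst r \<and> pjoin q r = p then f q * g r else 0) qr \<noteq> 0"
    using assms unfolding pmul_def by (rule sum.not_neutral_contains_not_neutral)
  then obtain q r where "(q,r) \<in> supp f \<times> supp g"
    "(if pend G q = fst r \<and> pjoin q r = p then f q * g r else 0) \<noteq> 0"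
    by (cases qr) auto
  then have "f q \<noteq> 0" "g r \<noteq> 0" "pend G q = fst r" "pjoin q r = p"
    by (auto simp: supp_def split: if_splits)
  then show ?thesis by blast
qed

lemma finite_supp_pmul: "finite (supp (f::_\<Rightarrow>'k::field)) \<Longrightarrow> finite (supp g) \<Longrightarrow> finite (supp (pmul G f g))"
  by (rule finite_subset[OF supp_pmul]) auto

lemma pmul_PA: "x \<in> PA G \<Longrightarrow> y \<in> PA G \<Longrightarrow> pmul G x y \<in> PA G"
proof -
  assume a: "x \<in> PA G" "y \<in> PA G"
  have "finite (supp (pmul G x y))" using a by (intro finite_supp_pmul) (auto simp: PA_def)
  moreover have "supp (pmul G x y) \<subseteq> {p. is_path G p}"
  proof
    fix p assume "p \<in> supp (pmul G x y)"
    then obtain q r where "x q \<noteq> 0" "y r \<noteq> 0" "pend G q = fst r" "pjoin q r = p"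
      using pmul_nz[of G x y p] by (auto simp: supp_def)
    then show "p \<in> {p. is_path G p}" using a by (auto intro: is_path_pjoin PA_path)
  qed
  ultimately show ?thesis by (simp add: PA_def)
qed

lemma pmul_bas_bas:
  "pmul G (bas a) (bas b) = (if pend G a = fst b then bas (pjoin a b) else (\<lambda>_. (0::'k::field)))"
  unfolding pmul_def supp_bas by (auto simp: bas_def)

lemma pmul_zero_left[simp]: "pmul G (\<lambda>_. 0) g = (\<lambda>_. 0)"
  by (simp add: pmul_def supp_def)
lemma pmul_zero_right[simp]: "pmul G f (\<lambda>_. 0) = (\<lambda>_. 0)"
  by (simp add: pmul_def supp_def)

lemma pmul_sum_left:
  assumes "finite I" "\<And>i. i \<in> I \<Longrightarrow> finite (supp (F i))" "finite (supp g)"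
  shows "pmul G (\<lambda>p. \<Sum>i\<in>I. F i p) g = (\<lambda>p. \<Sum>i\<in>I. pmul G (F i) g p)"
proof
  fix p
  let ?A = "\<Union>i\<in>I. supp (F i)"
  have fA: "finite ?A" using assms by auto
  have "pmul G (\<lambda>p. \<Sum>i\<in>I. F i p) g p =
     (\<Sum>(q, r)\<in>?A \<times> supp g. if pend G q = fst r \<and> pjoin q r = p then (\<Sum>i\<in>I. F i q) * g r else 0)"
    by (rule pmul_alt) (use fA assms supp_sum[of F I] in auto)
  also have "\<dots> = (\<Sum>(q, r)\<in>?A \<times> supp g. \<Sum>i\<in>I. if pend G q = fst r \<and> pjoin q r = p then F i q * g r else 0)"
    by (rule sum.cong) (auto simp: sum_distrib_right)
  also have "\<dots> = (\<Sum>i\<in>I. \<Sum>(q, r)\<in>?A \<times> supp g. if pend G q = fst r \<and> pjoin q r = p then F i q * g r else 0)"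
    by (subst sum.swap) (simp add: case_prod_beta)
  also have "\<dots> = (\<Sum>i\<in>I. pmul G (F i) g p)"
    by (rule sum.cong[OF refl], rule pmul_alt[symmetric]) (use fA assms in auto)
  finally show "pmul G (\<lambda>p. \<Sum>i\<in>I. F i p) g p = (\<Sum>i\<in>I. pmul G (F i) g p)" .
qed

lemma pmul_sum_right:
  assumes "finite I" "\<And>i. i \<in> I \<Longrightarrow> finite (supp (F i))" "finite (supp f)"
  shows "pmul G f (\<lambda>p. \<Sum>i\<in>I. F i p) = (\<lambda>p. \<Sum>i\<in>I. pmul G f (F i) p)"
proof
  fix p
  let ?A = "\<Union>i\<in>I. supp (F i)"
  have fA: "finite ?A" using assms by auto
  have "pmul G f (\<lambda>p. \<Sum>i\<in>I. F i p) p =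
     (\<Sum>(q, r)\<in>supp f \<times> ?A. if pend G q = fst r \<and> pjoin q r = p then f q * (\<Sum>i\<in>I. F i r) else 0)"
    by (rule pmul_alt) (use fA assms supp_sum[of F I] in auto)
  also have "\<dots> = (\<Sum>(q, r)\<in>supp f \<times> ?A. \<Sum>i\<in>I. if pend G q = fst r \<and> pjoin q r = p then f q * F i r else 0)"
    by (rule sum.cong) (auto simp: sum_distrib_left)
  also have "\<dots> = (\<Sum>i\<in>I. \<Sum>(q, r)\<in>supp f \<times> ?A. if pend G q = fst r \<and> pjoin q r = p then f q * F i r else 0)"
    by (subst sum.swap) (simp add: case_prod_beta)
  also have "\<dots> = (\<Sum>i\<in>I. pmul G f (F i) p)"
    by (rule sum.cong[OF refl], rule pmul_alt[symmetric]) (use fA assms in auto)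
  finally show "pmul G f (\<lambda>p. \<Sum>i\<in>I. F i p) p = (\<Sum>i\<in>I. pmul G f (F i) p)" .
qed

lemma pmul_smul_left: fixes f :: "_ \<Rightarrow> 'k::field" shows "pmul G (\<lambda>p. c * f p) g = (\<lambda>p. c * pmul G f g p)"
proof (cases "c = 0")
  case True then show ?thesis by simp
next
  case False
  then have "supp (\<lambda>p. c * f p) = supp f" by (auto simp: supp_def)
  then show ?thesis unfolding pmul_def
    by (auto simp: sum_distrib_left intro!: sum.cong)
qed

lemma pmul_smul_right: fixes g :: "_ \<Rightarrow> 'k::field" shows "pmul G f (\<lambda>p. c * g p) = (\<lambda>p. c * pmul G f g p)"
proof (cases "c = 0")
  case True then show ?thesis by simp
next
  case False
  then have "supp (\<lambda>p. c * g p) = supp g" by (auto simp: supp_def)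
  then show ?thesis unfolding pmul_def
    by (auto simp: sum_distrib_left intro!: sum.cong)
qed

lemma pmul_add_left:
  assumes "finite (supp x)" "finite (supp y)" "finite (supp g)"
  shows "pmul G (\<lambda>p. x p + y p) g = (\<lambda>p. pmul G x g p + pmul G y g p)"
  using pmul_sum_left[of "{True, False}" "\<lambda>b. if b then x else y" g G] assms by simp

lemma pmul_add_right:
  assumes "finite (supp x)" "finite (supp y)" "finite (supp f)"
  shows "pmul G f (\<lambda>p. x p + y p) = (\<lambda>p. pmul G f x p + pmul G f y p)"
  using pmul_sum_right[of "{True, False}" "\<lambda>b. if b then x else y" f G] assms by simp




lemma finite_supp_bas[simp]: "finite (supp (bas p :: _ \<Rightarrow> 'k::field))" by simp

lemma finite_supp_sum: "finite I \<Longrightarrow> (\<And>i. i \<in> I \<Longrightarrow> finite (supp (F i :: _ \<Rightarrow> 'k::field))) \<Longrightarrow>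
   finite (supp (\<lambda>p. \<Sum>i\<in>I. F i p))"
  by (rule finite_subset[OF supp_sum]) auto

lemma finite_supp_smul: "finite (supp (F :: _ \<Rightarrow> 'k::field)) \<Longrightarrow> finite (supp (\<lambda>p. c * F p))"
  by (rule finite_subset[OF supp_smul])

lemma finite_supp_lin: "finite I \<Longrightarrow> (\<And>i. i \<in> I \<Longrightarrow> finite (supp (F i :: _ \<Rightarrow> 'k::field))) \<Longrightarrow>
   finite (supp (\<lambda>p. \<Sum>i\<in>I. c i * F i p))"
  by (rule finite_supp_sum) (auto intro: finite_supp_smul)

lemma pmul_lin_left:
  fixes F :: "_ \<Rightarrow> _ \<Rightarrow> 'k::field"
  assumes "finite I" "\<And>i. i \<in> I \<Longrightarrow> finite (supp (F i))" "finite (supp g)"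
  shows "pmul G (\<lambda>p. \<Sum>i\<in>I. c i * F i p) g = (\<lambda>p. \<Sum>i\<in>I. c i * pmul G (F i) g p)"
  by (subst pmul_sum_left) (use assms in \<open>auto intro: finite_supp_smul simp: pmul_smul_left\<close>)

lemma pmul_lin_right:
  fixes F :: "_ \<Rightarrow> _ \<Rightarrow> 'k::field"
  assumes "finite I" "\<And>i. i \<in> I \<Longrightarrow> finite (supp (F i))" "finite (supp f)"
  shows "pmul G f (\<lambda>p. \<Sum>i\<in>I. c i * F i p) = (\<lambda>p. \<Sum>i\<in>I. c i * pmul G f (F i) p)"
  by (subst pmul_sum_right) (use assms in \<open>auto intro: finite_supp_smul simp: pmul_smul_right\<close>)

lemma pmul_exp_right:
  fixes x h :: "_ \<Rightarrow> 'k::field"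
  assumes "finite C" "supp h \<subseteq> C" "finite (supp x)"
  shows "pmul G x h p = (\<Sum>w\<in>C. h w * pmul G x (bas w) p)"
proof -
  have "pmul G x h = pmul G x (\<lambda>p. \<Sum>w\<in>C. h w * bas w p)"
    using expand[OF assms(1,2)] by simp
  also have "\<dots> = (\<lambda>p. \<Sum>w\<in>C. h w * pmul G x (bas w) p)"
    by (rule pmul_lin_right) (use assms in auto)
  finally show ?thesis by simp
qed

lemma pmul_exp_left:
  fixes x h :: "_ \<Rightarrow> 'k::field"
  assumes "finite C" "supp h \<subseteq> C" "finite (supp x)"
  shows "pmul G h x p = (\<Sum>w\<in>C. h w * pmul G (bas w) x p)"
proof -
  have "pmul G h x = pmul G (\<lambda>p. \<Sum>w\<in>C. h w * bas w p) x"
    using expand[OF assms(1,2)] by simp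
  also have "\<dots> = (\<lambda>p. \<Sum>w\<in>C. h w * pmul G (bas w) x p)"
    by (rule pmul_lin_left) (use assms in auto)
  finally show ?thesis by simp
qed

lemma pmul_exp2:
  fixes f g :: "_ \<Rightarrow> 'k::field"
  assumes "finite (supp f)" "finite (supp g)"
  shows "pmul G f g = (\<lambda>p. \<Sum>q\<in>supp f. f q * (\<Sum>r\<in>supp g. g r * pmul G (bas q) (bas r) p))"
proof
  fix p
  show "pmul G f g p = (\<Sum>q\<in>supp f. f q * (\<Sum>r\<in>supp g. g r * pmul G (bas q) (bas r) p))"
    by (subst pmul_exp_left[where C="supp f"]) (use assms in \<open>auto intro!: sum.cong pmul_exp_right\<close>)
qed

lemma pmul_bas_assoc:
  "pmul G (pmul G (bas q) (bas r)) (bas w) = (pmul G (bas q) (pmul G (bas r) (bas w)) :: _ \<Rightarrow> 'k::field)"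
  by (auto simp: pmul_bas_bas pend_pjoin pjoin_assoc)

lemma pmul_assoc:
  fixes f g h :: "_ \<Rightarrow> 'k::field"
  assumes f: "finite (supp f)" and g: "finite (supp g)" and h: "finite (supp h)"
  shows "pmul G (pmul G f g) h = pmul G f (pmul G g h)"
proof
  fix p
  have fin1: "\<And>q. finite (supp (\<lambda>p. \<Sum>r\<in>supp g. g r * pmul G (bas q) (bas r) p))"
    using g by (intro finite_supp_lin finite_supp_pmul) auto
  have fin2: "\<And>r. finite (supp (\<lambda>p. \<Sum>w\<in>supp h. h w * pmul G (bas r) (bas w) p))"
    using h by (intro finite_supp_lin finite_supp_pmul) auto
  have "pmul G (pmul G f g) h p =
        pmul G (\<lambda>p. \<Sum>q\<in>supp f. f q * (\<Sum>r\<in>supp g. g r * pmul G (bas q) (bas r) p)) h p"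
    using pmul_exp2[OF f g] by simp
  also have "\<dots> = (\<Sum>q\<in>supp f. f q * pmul G (\<lambda>p. \<Sum>r\<in>supp g. g r * pmul G (bas q) (bas r) p) h p)"
    by (subst pmul_lin_left) (use f h fin1 in auto)
  also have "\<dots> = (\<Sum>q\<in>supp f. f q * (\<Sum>r\<in>supp g. g r * pmul G (pmul G (bas q) (bas r)) h p))"
    by (subst pmul_lin_left) (use g h in \<open>auto intro: finite_supp_pmul\<close>)
  also have "\<dots> = (\<Sum>q\<in>supp f. f q * (\<Sum>r\<in>supp g. g r * (\<Sum>w\<in>supp h. h w *
                   pmul G (pmul G (bas q) (bas r)) (bas w) p)))"
    by (intro sum.cong refl arg_cong2[where f="(*)"] pmul_exp_right) (use h in \<open>auto intro: finite_supp_pmul\<close>)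
  also have "\<dots> = (\<Sum>q\<in>supp f. f q * (\<Sum>r\<in>supp g. g r * (\<Sum>w\<in>supp h. h w *
                   pmul G (bas q) (pmul G (bas r) (bas w)) p)))"
    by (simp add: pmul_bas_assoc)
  also have "\<dots> = (\<Sum>q\<in>supp f. f q * (\<Sum>r\<in>supp g. g r * pmul G (bas q) (\<lambda>p. \<Sum>w\<in>supp h. h w * pmul G (bas r) (bas w) p) p))"
    by (subst pmul_lin_right) (use h in \<open>auto intro: finite_supp_pmul\<close>)
  also have "\<dots> = (\<Sum>q\<in>supp f. f q * pmul G (bas q) (\<lambda>p. \<Sum>r\<in>supp g. g r * (\<Sum>w\<in>supp h. h w * pmul G (bas r) (bas w) p)) p)"
    by (subst pmul_lin_right) (use g fin2 in auto)
  also have "\<dots> = (\<Sum>q\<in>supp f. f q * pmul G (bas q) (pmul G g h) p)"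
    using pmul_exp2[OF g h] by simp
  also have "\<dots> = pmul G f (pmul G g h) p"
    by (rule pmul_exp_left[symmetric]) (use f g h in \<open>auto intro: finite_supp_pmul\<close>)
  finally show "pmul G (pmul G f g) h p = pmul G f (pmul G g h) p" .
qed




definition tr :: "nat \<Rightarrow> (('v,'e) path \<Rightarrow> 'k::field) \<Rightarrow> ('v,'e) path \<Rightarrow> 'k" where
  "tr n x = (\<lambda>p. if plen p < n then x p else 0)"

definition qval :: "nat \<Rightarrow> ('v,'e,'k::field) qelem \<Rightarrow> ('v,'e) path \<Rightarrow> 'k" where
  "qval n X = tr n (rep X)"

lemma supp_tr: "supp (tr n x) \<subseteq> supp x" by (auto simp: supp_def tr_def)

lemma tr_PA: "x \<in> PA G \<Longrightarrow> tr n x \<in> PA G"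
  unfolding PA_def using supp_tr[of n x] by (auto intro: finite_subset)

lemma tr_tr[simp]: "tr n (tr n x) = tr n x" by (auto simp: tr_def)
lemma tr_zero[simp]: "tr n (\<lambda>_. 0) = (\<lambda>_. 0)" by (auto simp: tr_def)
lemma tr_add: "tr n (\<lambda>p. x p + y p) = (\<lambda>p. tr n x p + tr n y p)" by (auto simp: tr_def)
lemma tr_diff: "tr n (\<lambda>p. x p - y p) = (\<lambda>p. tr n x p - tr n y p)" by (auto simp: tr_def)
lemma tr_smul: "tr n (\<lambda>p. c * x p) = (\<lambda>p. c * tr n x p)" by (auto simp: tr_def)
lemma tr_sum: "tr n (\<lambda>p. \<Sum>i\<in>I. F i p) = (\<lambda>p. \<Sum>i\<in>I. tr n (F i) p)" by (auto simp: tr_def)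
lemma tr_bas_short: "plen s < n \<Longrightarrow> tr n (bas s) = bas s" by (auto simp: tr_def bas_def)

lemma tr_pmul_left:
  fixes x y :: "_ \<Rightarrow> 'k::field"
  assumes "finite (supp x)" "finite (supp y)"
  shows "tr n (pmul G x y) = tr n (pmul G (tr n x) y)"
proof
  fix p
  show "tr n (pmul G x y) p = tr n (pmul G (tr n x) y) p"
  proof (cases "plen p < n")
    case True
    have "pmul G x y p = (\<Sum>(q, r)\<in>supp x \<times> supp y. if pend G q = fst r \<and> pjoin q r = p then x q * y r else 0)"
      by (rule pmul_alt) (use assms in auto)
    also have "\<dots> = (\<Sum>(q, r)\<in>supp x \<times> supp y. if pend G q = fst r \<and> pjoin q r = p then tr n x q * y r else 0)"
      by (rule sum.cong) (use True in \<open>auto simp: tr_def\<close>)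
    also have "\<dots> = pmul G (tr n x) y p"
      by (rule pmul_alt[symmetric]) (use assms supp_tr in auto)
    finally show ?thesis by (simp add: tr_def)
  qed (simp add: tr_def)
qed

lemma tr_pmul_right:
  fixes x y :: "_ \<Rightarrow> 'k::field"
  assumes "finite (supp x)" "finite (supp y)"
  shows "tr n (pmul G x y) = tr n (pmul G x (tr n y))"
proof
  fix p
  show "tr n (pmul G x y) p = tr n (pmul G x (tr n y)) p"
  proof (cases "plen p < n")
    case True
    have "pmul G x y p = (\<Sum>(q, r)\<in>supp x \<times> supp y. if pend G q = fst r \<and> pjoin q r = p then x q * y r else 0)"
      by (rule pmul_alt) (use assms in auto)
    also have "\<dots> = (\<Sum>(q, r)\<in>supp x \<times> supp y. if pend G q = fst r \<and> pjoin q r = p then x q * tr n y r else 0)"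
      by (rule sum.cong) (use True in \<open>auto simp: tr_def\<close>)
    also have "\<dots> = pmul G x (tr n y) p"
      by (rule pmul_alt[symmetric]) (use assms supp_tr in auto)
    finally show ?thesis by (simp add: tr_def)
  qed (simp add: tr_def)
qed

lemma tr_pmul_both:
  fixes x y :: "_ \<Rightarrow> 'k::field"
  assumes "finite (supp x)" "finite (supp y)"
  shows "tr n (pmul G x y) = tr n (pmul G (tr n x) (tr n y))"
  using tr_pmul_left[OF assms, of n G] tr_pmul_right[of "tr n x" y n G] assms
    finite_subset[OF supp_tr[of n x]] by simp

section \<open>The ideal\<close>

lemma knG_sub:
  assumes "x \<in> knG G n"
  shows "x \<in> PA G \<and> (\<forall>p. plen p < n \<longrightarrow> x p = 0)"
  using assms
proof (induction rule: knG.induct)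
  case (gen p) then have "bas p \<in> PA G" by (simp add: bas_PA)
  moreover have "\<forall>q. plen q < n \<longrightarrow> bas p q = 0" using gen by (auto simp: bas_def)
  ultimately show ?case by blast
next
  case zero then show ?case by simp
next
  case (add x y) then show ?case by (auto intro: add_PA)
next
  case (smul x c) then show ?case by (auto intro: smul_PA)
next
  case (lmul a x)
  have "pmul G a x p = 0" if "plen p < n" for p
  proof (rule ccontr)
    assume "pmul G a x p \<noteq> 0"
    then obtain q r where "a q \<noteq> 0" "x r \<noteq> 0" "pjoin q r = p" using pmul_nz by blast
    moreover have "plen r < n" using calculation that by auto
    ultimately show False using lmul.IH by blast
  qed
  then show ?case using lmul by (auto intro: pmul_PA)
next
  case (rmul a x)
  have "pmul G x a p = 0" if "plen p < n" for p
  proof (rule ccontr)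
    assume "pmul G x a p \<noteq> 0"
    then obtain q r where "x q \<noteq> 0" "a r \<noteq> 0" "pjoin q r = p" using pmul_nz by blast
    moreover have "plen q < n" using calculation that by auto
    ultimately show False using rmul.IH by blast
  qed
  then show ?case using rmul by (auto intro: pmul_PA)
qed

lemma knG_sum: "finite A \<Longrightarrow> (\<And>i. i \<in> A \<Longrightarrow> F i \<in> knG G n) \<Longrightarrow> (\<lambda>p. \<Sum>i\<in>A. F i p) \<in> knG G n"
proof (induction A rule: finite_induct)
  case empty then show ?case using knG.zero by simp
next
  case (insert a A) then show ?case using knG.add[of "F a" G n "\<lambda>p. \<Sum>i\<in>A. F i p"] by simp
qed

lemma bas_long_knG:
  assumes fq: "finite_quiver G" and p: "is_path G q" "n \<le> plen q"
  shows "bas q \<in> knG G n"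
proof -
  obtain v l where q: "q = (v, l)" by (cases q)
  define l1 where "l1 = take n l"
  define l2 where "l2 = drop n l"
  have l: "l = l1 @ l2" by (simp add: l1_def l2_def)
  have len: "length l1 = n" using p q by (simp add: l1_def plen_def)
  have p1: "is_path G (v, l1)" and p2: "is_path G (pend G (v,l1), l2)"
    using is_path_split[of G v l1 l2] p q l fq by auto
  have "pmul G (bas (v,l1)) (bas (pend G (v,l1), l2)) = bas q"
    by (simp add: pmul_bas_bas pjoin_def q l)
  moreover have "bas (v,l1) \<in> knG G n" using p1 len by (intro knG.gen) (auto simp: plen_def)
  ultimately show ?thesis using knG.rmul[of "bas (pend G (v,l1), l2)" G "bas (v,l1)" n] p2 bas_PA
    by metis
qed

lemma knG_sup:
  fixes x :: "_ \<Rightarrow> 'k::field"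
  assumes fq: "finite_quiver G" and x: "x \<in> PA G" and z: "\<forall>p. plen p < n \<longrightarrow> x p = 0"
  shows "x \<in> knG G n"
proof -
  have "x = (\<lambda>p. \<Sum>q\<in>supp x. x q * bas q p)" using x by (intro expand) (auto simp: PA_def)
  also have "\<dots> \<in> knG G n"
  proof (rule knG_sum)
    show "finite (supp x)" using x by (simp add: PA_def)
    fix q assume q: "q \<in> supp x"
    then have "is_path G q" using x by (auto simp: PA_def supp_def)
    moreover have "n \<le> plen q"
    proof (rule ccontr)
      assume "\<not> n \<le> plen q"
      then have "x q = 0" using z[rule_format, of q] by simp
      then show False using q by (simp add: supp_def)
    qed
    ultimately show "(\<lambda>p. x q * bas q p) \<in> knG G n" using bas_long_knG[OF fq] by (intro knG.smul)
  qed
  finally show ?thesis .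
qed

lemma knG_iff:
  fixes x :: "_ \<Rightarrow> 'k::field"
  assumes fq: "finite_quiver G"
  shows "x \<in> knG G n \<longleftrightarrow> x \<in> PA G \<and> tr n x = (\<lambda>_. 0)"
  using knG_sub[of x G n] knG_sup[OF fq, of x n] by (auto simp: tr_def fun_eq_iff)

section \<open>The quotient\<close>

lemma coset_char:
  fixes x :: "_ \<Rightarrow> 'k::field"
  assumes fq: "finite_quiver G" and x: "x \<in> PA G"
  shows "coset G n x = {y \<in> PA G. tr n y = tr n x}"
proof (rule set_eqI)
  fix y
  show "y \<in> coset G n x \<longleftrightarrow> y \<in> {y \<in> PA G. tr n y = tr n x}"
  proof (cases "y \<in> PA G")
    case True
    then have d: "(\<lambda>p. x p - y p) \<in> PA G" using x by (rule diff_PA[rotated])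
    have "(\<lambda>p. x p - y p) \<in> knG G n \<longleftrightarrow> tr n (\<lambda>p. x p - y p) = (\<lambda>_. 0)"
      using d knG_iff[OF fq, of "\<lambda>p. x p - y p" n] by blast
    also have "\<dots> \<longleftrightarrow> tr n y = tr n x"
      unfolding tr_diff fun_eq_iff by auto
    finally show ?thesis using True by (simp add: coset_def)
  qed (simp add: coset_def)
qed

lemma coset_self: "finite_quiver G \<Longrightarrow> x \<in> PA G \<Longrightarrow> x \<in> coset G n x"
  by (simp add: coset_char)

lemma rep_in: "finite_quiver G \<Longrightarrow> X \<in> QA G n \<Longrightarrow> rep X \<in> X"
proof -
  assume fq: "finite_quiver G" and X: "X \<in> QA G n"
  then obtain x where "x \<in> PA G" "X = coset G n x" by (auto simp: QA_def)
  then have "x \<in> X" using coset_self[OF fq] by blast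
  then show "rep X \<in> X" unfolding rep_def by (rule someI[of "\<lambda>y. y \<in> X"])
qed

lemma rep_PA: "finite_quiver G \<Longrightarrow> X \<in> QA G n \<Longrightarrow> rep X \<in> PA G"
proof -
  assume fq: "finite_quiver G" and X: "X \<in> QA G n"
  then obtain x where "x \<in> PA G" "X = coset G n x" by (auto simp: QA_def)
  moreover have "rep X \<in> X" using rep_in[OF fq X] .
  ultimately show ?thesis by (simp add: coset_def)
qed

lemma QA_char: "finite_quiver G \<Longrightarrow> X \<in> QA G n \<Longrightarrow> X = {y \<in> PA G. tr n y = qval n X}"
proof -
  assume fq: "finite_quiver G" and X: "X \<in> QA G n"
  then obtain x where x: "x \<in> PA G" "X = coset G n x" by (auto simp: QA_def)
  then have "rep X \<in> X" using rep_in fq X by blast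
  then have "tr n (rep X) = tr n x" using x coset_char[OF fq] by auto
  then show ?thesis using x coset_char[OF fq] by (auto simp: qval_def)
qed

lemma QA_eq: "finite_quiver G \<Longrightarrow> X \<in> QA G n \<Longrightarrow> Y \<in> QA G n \<Longrightarrow> qval n X = qval n Y \<Longrightarrow> X = Y"
proof -
  assume a: "finite_quiver G" "X \<in> QA G n" "Y \<in> QA G n" "qval n X = qval n Y"
  have "X = {y \<in> PA G. tr n y = qval n X}" using QA_char a by blast
  also have "\<dots> = Y" using QA_char[of G Y n] a by simp
  finally show "X = Y" .
qed

lemma coset_QA: "x \<in> PA G \<Longrightarrow> coset G n x \<in> QA G n" by (simp add: QA_def)

lemma qval_coset: "finite_quiver G \<Longrightarrow> x \<in> PA G \<Longrightarrow> qval n (coset G n x) = tr n x"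
  using rep_in[of G "coset G n x" n] coset_char[of G x n] by (auto simp: qval_def QA_def)

lemma qval_PA: "finite_quiver G \<Longrightarrow> X \<in> QA G n \<Longrightarrow> qval n X \<in> PA G"
  by (simp add: qval_def tr_PA rep_PA)

lemma qval_short: "plen p \<ge> n \<Longrightarrow> qval n X p = 0"
  by (simp add: qval_def tr_def)

lemma qval_tr: "tr n (qval n X) = qval n X" by (simp add: qval_def)

lemma coset_eq_iff: "finite_quiver G \<Longrightarrow> x \<in> PA G \<Longrightarrow> y \<in> PA G \<Longrightarrow>
   coset G n x = coset G n y \<longleftrightarrow> tr n x = tr n y"
proof
  assume "finite_quiver G" "x \<in> PA G" "y \<in> PA G" "coset G n x = coset G n y"
  then show "tr n x = tr n y" using qval_coset[of G x n] qval_coset[of G y n] by simp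
next
  assume "finite_quiver G" "x \<in> PA G" "y \<in> PA G" "tr n x = tr n y"
  then show "coset G n x = coset G n y"
    by (intro QA_eq[of G _ n]) (auto simp: coset_QA qval_coset)
qed

lemma coset_qval: "finite_quiver G \<Longrightarrow> X \<in> QA G n \<Longrightarrow> coset G n (qval n X) = X"
  by (rule QA_eq[of G _ n]) (auto simp: coset_QA qval_PA qval_coset qval_tr)

lemma qadd_QA: "finite_quiver G \<Longrightarrow> X \<in> QA G n \<Longrightarrow> Y \<in> QA G n \<Longrightarrow> qadd G n X Y \<in> QA G n"
  by (simp add: qadd_def coset_QA add_PA rep_PA)
lemma qsmul_QA: "finite_quiver G \<Longrightarrow> X \<in> QA G n \<Longrightarrow> qsmul G n c X \<in> QA G n"
  by (simp add: qsmul_def coset_QA smul_PA rep_PA)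
lemma qmul_QA: "finite_quiver G \<Longrightarrow> X \<in> QA G n \<Longrightarrow> Y \<in> QA G n \<Longrightarrow> qmul G n X Y \<in> QA G n"
  by (simp add: qmul_def coset_QA pmul_PA rep_PA)
lemma qzero_QA: "qzero G n \<in> QA G n"
  by (simp add: qzero_def coset_QA)
lemma qsum_QA: "finite_quiver G \<Longrightarrow> finite S \<Longrightarrow> (\<And>i. i \<in> S \<Longrightarrow> F i \<in> QA G n) \<Longrightarrow> qsum G n S F \<in> QA G n"
  unfolding qsum_def by (intro coset_QA sum_PA) (auto intro: rep_PA)

lemma qval_qadd: "finite_quiver G \<Longrightarrow> X \<in> QA G n \<Longrightarrow> Y \<in> QA G n \<Longrightarrow>
   qval n (qadd G n X Y) = (\<lambda>p. qval n X p + qval n Y p)"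
  by (simp add: qadd_def qval_coset add_PA rep_PA tr_add) (simp add: qval_def)
lemma qval_qsmul: "finite_quiver G \<Longrightarrow> X \<in> QA G n \<Longrightarrow>
   qval n (qsmul G n c X) = (\<lambda>p. c * qval n X p)"
  by (simp add: qsmul_def qval_coset smul_PA rep_PA tr_smul) (simp add: qval_def)
lemma qval_qzero: "finite_quiver G \<Longrightarrow> qval n (qzero G n) = (\<lambda>_. 0)"
  by (simp add: qzero_def qval_coset)
lemma qval_qsum: "finite_quiver G \<Longrightarrow> finite S \<Longrightarrow> (\<And>i. i \<in> S \<Longrightarrow> F i \<in> QA G n) \<Longrightarrow>
   qval n (qsum G n S F) = (\<lambda>p. \<Sum>i\<in>S. qval n (F i) p)"
proof -
  assume a: "finite_quiver G" "finite S" "\<And>i. i \<in> S \<Longrightarrow> F i \<in> QA G n"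
  have "(\<lambda>p. \<Sum>i\<in>S. rep (F i) p) \<in> PA G" using a by (intro sum_PA) (auto intro: rep_PA)
  then have "qval n (coset G n (\<lambda>p. \<Sum>i\<in>S. rep (F i) p)) = tr n (\<lambda>p. \<Sum>i\<in>S. rep (F i) p)"
    using a(1) by (rule qval_coset[rotated])
  then show ?thesis unfolding qsum_def by (simp add: tr_sum qval_def)
qed
lemma qval_qmul: "finite_quiver G \<Longrightarrow> X \<in> QA G n \<Longrightarrow> Y \<in> QA G n \<Longrightarrow>
   qval n (qmul G n X Y) = tr n (pmul G (qval n X) (qval n Y))"
proof -
  assume a: "finite_quiver G" "X \<in> QA G n" "Y \<in> QA G n"
  then have "qval n (qmul G n X Y) = tr n (pmul G (rep X) (rep Y))"
    by (simp add: qmul_def qval_coset pmul_PA rep_PA)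
  also have "\<dots> = tr n (pmul G (qval n X) (qval n Y))"
    unfolding qval_def by (rule tr_pmul_both) (use a rep_PA PA_finite in blast)+
  finally show ?thesis .
qed

lemma coset_add: "finite_quiver G \<Longrightarrow> x \<in> PA G \<Longrightarrow> y \<in> PA G \<Longrightarrow>
  coset G n (\<lambda>p. x p + y p) = qadd G n (coset G n x) (coset G n y)"
  by (rule QA_eq[of G _ n]) (auto simp: qval_qadd qval_coset coset_QA add_PA qadd_QA tr_add)
lemma coset_smul: "finite_quiver G \<Longrightarrow> x \<in> PA G \<Longrightarrow>
  coset G n (\<lambda>p. c * x p) = qsmul G n c (coset G n x)"
  by (rule QA_eq[of G _ n]) (auto simp: qval_qsmul qval_coset coset_QA smul_PA qsmul_QA tr_smul)
lemma coset_mul: "finite_quiver G \<Longrightarrow> x \<in> PA G \<Longrightarrow> y \<in> PA G \<Longrightarrow>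
  coset G n (pmul G x y) = qmul G n (coset G n x) (coset G n y)"
  by (rule QA_eq[of G _ n]) (auto simp: qval_qmul qval_coset coset_QA pmul_PA qmul_QA
        intro: tr_pmul_both PA_finite)




lemma pmul_diff_left:
  fixes x y g :: "_ \<Rightarrow> 'k::field"
  assumes "finite (supp x)" "finite (supp y)" "finite (supp g)"
  shows "pmul G (\<lambda>p. x p - y p) g = (\<lambda>p. pmul G x g p - pmul G y g p)"
proof -
  have "pmul G (\<lambda>p. x p - y p) g = pmul G (\<lambda>p. x p + (\<lambda>p. (-1) * y p) p) g" by simp
  also have "\<dots> = (\<lambda>p. pmul G x g p + pmul G (\<lambda>p. (-1) * y p) g p)"
    by (rule pmul_add_left) (use assms finite_supp_smul[of y "-1"] in auto)
  finally show ?thesis by (simp add: pmul_smul_left[of G "-1" y g, simplified])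
qed

lemma pmul_diff_right:
  fixes x y g :: "_ \<Rightarrow> 'k::field"
  assumes "finite (supp x)" "finite (supp y)" "finite (supp g)"
  shows "pmul G g (\<lambda>p. x p - y p) = (\<lambda>p. pmul G g x p - pmul G g y p)"
proof -
  have "pmul G g (\<lambda>p. x p - y p) = pmul G g (\<lambda>p. x p + (\<lambda>p. (-1) * y p) p)" by simp
  also have "\<dots> = (\<lambda>p. pmul G g x p + pmul G g (\<lambda>p. (-1) * y p) p)"
    by (rule pmul_add_right) (use assms finite_supp_smul[of y "-1"] in auto)
  finally show ?thesis by (simp add: pmul_smul_right[of G g "-1" y, simplified])
qed

lemma pmul_bas_left_at:
  fixes y :: "_ \<Rightarrow> 'k::field"
  assumes "finite (supp y)"
  shows "pmul G (bas p) y (fst p, snd p @ l) = y (pend G p, l)"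
proof -
  have "pmul G (bas p) y (fst p, snd p @ l) =
     (\<Sum>(q, r)\<in>{p} \<times> supp y. if pend G q = fst r \<and> pjoin q r = (fst p, snd p @ l) then bas p q * y r else 0)"
    by (rule pmul_alt) (use assms in auto)
  also have "\<dots> = (\<Sum>r\<in>supp y. if r = (pend G p, l) then y r else 0)"
    by (simp add: sum.cartesian_product[symmetric] bas_def pjoin_def)
       (rule sum.cong, auto simp: bas_def)
  also have "\<dots> = y (pend G p, l)" using assms by (auto simp: supp_def)
  finally show ?thesis .
qed

lemma pmul_bas_right_at:
  fixes x :: "_ \<Rightarrow> 'k::field"
  assumes "finite (supp x)"
  shows "pmul G x (bas p) (w, l @ snd p) = (if pend G (w,l) = fst p then x (w,l) else 0)"
proof -
  have "pmul G x (bas p) (w, l @ snd p) =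
     (\<Sum>(q, r)\<in>supp x \<times> {p}. if pend G q = fst r \<and> pjoin q r = (w, l @ snd p) then x q * bas p r else 0)"
    by (rule pmul_alt) (use assms in auto)
  also have "\<dots> = (\<Sum>q\<in>supp x. if q = (w,l) \<and> pend G (w,l) = fst p then x q else 0)"
    by (simp add: sum.cartesian_product[symmetric] bas_def pjoin_def)
       (rule sum.cong, auto simp: bas_def)
  also have "\<dots> = (if pend G (w,l) = fst p then x (w,l) else 0)" using assms by (auto simp: supp_def)
  finally show ?thesis .
qed

lemma pmul_vert_right:
  fixes x :: "_ \<Rightarrow> 'k::field"
  assumes "finite (supp x)"
  shows "pmul G x (bas (w, [])) q = (if pend G q = w then x q else 0)"
  using pmul_bas_right_at[OF assms, of G "(w,[])" "fst q" "snd q"] by simp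

lemma pmul_vert_left:
  fixes x :: "_ \<Rightarrow> 'k::field"
  assumes "finite (supp x)"
  shows "pmul G (bas (w, [])) x q = (if fst q = w then x q else 0)"
proof (cases "fst q = w")
  case True
  then show ?thesis using pmul_bas_left_at[OF assms, of G "(w,[])" "snd q"] by (cases q) (simp add: pend_def)
next
  case False
  have "pmul G (bas (w, [])) x q = 0"
  proof (rule ccontr)
    assume "pmul G (bas (w, [])) x q \<noteq> 0"
    then obtain a b where "bas (w,[]) a \<noteq> (0::'k)" "pjoin a b = q" using pmul_nz by blast
    then show False using False by (auto simp: bas_def split: if_splits)
  qed
  then show ?thesis using False by simp
qed

section \<open>Derivations as maps on representatives\<close>

definition isder :: "('v,'e) quiver \<Rightarrow> nat \<Rightarrow> ((('v,'e) path \<Rightarrow> 'k::field) \<Rightarrow> (('v,'e) path \<Rightarrow> 'k)) \<Rightarrow> bool" where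
  "isder G n d \<longleftrightarrow> (\<forall>x\<in>PA G. d x \<in> PA G \<and> tr n (d x) = d x) \<and>
     (\<forall>x\<in>PA G. \<forall>y\<in>PA G. d (\<lambda>p. x p + y p) = (\<lambda>p. d x p + d y p)) \<and>
     (\<forall>c. \<forall>x\<in>PA G. d (\<lambda>p. c * x p) = (\<lambda>p. c * d x p)) \<and>
     (\<forall>x\<in>PA G. \<forall>y\<in>PA G. d (pmul G x y) = (\<lambda>p. tr n (pmul G (d x) y) p + tr n (pmul G x (d y)) p)) \<and>
     (\<forall>x\<in>PA G. \<forall>y\<in>PA G. tr n x = tr n y \<longrightarrow> d x = d y)"

lemma isderD:
  assumes "isder G n d"
  shows "\<And>x. x \<in> PA G \<Longrightarrow> d x \<in> PA G"
    "\<And>x. x \<in> PA G \<Longrightarrow> tr n (d x) = d x"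
    "\<And>x y. x \<in> PA G \<Longrightarrow> y \<in> PA G \<Longrightarrow> d (\<lambda>p. x p + y p) = (\<lambda>p. d x p + d y p)"
    "\<And>c x. x \<in> PA G \<Longrightarrow> d (\<lambda>p. c * x p) = (\<lambda>p. c * d x p)"
    "\<And>x y. x \<in> PA G \<Longrightarrow> y \<in> PA G \<Longrightarrow> d (pmul G x y) = (\<lambda>p. tr n (pmul G (d x) y) p + tr n (pmul G x (d y)) p)"
    "\<And>x y. x \<in> PA G \<Longrightarrow> y \<in> PA G \<Longrightarrow> tr n x = tr n y \<Longrightarrow> d x = d y"
  using assms unfolding isder_def by blast+

lemma isder_zero:
  assumes "isder G n d"
  shows "d (\<lambda>_. 0) = (\<lambda>_. 0)"
  using isderD(4)[OF assms, of "\<lambda>_. 0" 0] by simp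

lemma isder_short:
  assumes "isder G n d" "x \<in> PA G" "n \<le> plen q"
  shows "d x q = 0"
  using isderD(2)[OF assms(1,2)] assms(3) by (metis tr_def not_le)

lemma isder_path:
  assumes "isder G n d" "x \<in> PA G" "d x q \<noteq> 0"
  shows "is_path G q"
  using isderD(1)[OF assms(1,2)] assms(3) by (rule PA_path)

lemma isder_sum_fun:
  assumes "isder G n d" "finite A" "\<And>i. i \<in> A \<Longrightarrow> F i \<in> PA G"
  shows "d (\<lambda>p. \<Sum>i\<in>A. F i p) = (\<lambda>p. \<Sum>i\<in>A. d (F i) p)"
  using assms(2,3)
proof (induction A rule: finite_induct)
  case empty then show ?case using isder_zero[OF assms(1)] by simp
next
  case (insert a A)
  have "d (\<lambda>p. \<Sum>i\<in>insert a A. F i p) = d (\<lambda>p. F a p + (\<lambda>p. \<Sum>i\<in>A. F i p) p)"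
    using insert by simp
  also have "\<dots> = (\<lambda>p. d (F a) p + d (\<lambda>p. \<Sum>i\<in>A. F i p) p)"
    by (rule isderD(3)[OF assms(1)]) (use insert in \<open>auto intro: sum_PA\<close>)
  finally show ?case using insert by simp
qed

lemma Diff_isder:
  fixes \<delta> :: "('v,'e,'k::field) qelem \<Rightarrow> ('v,'e,'k) qelem"
  assumes fq: "finite_quiver G" and D: "\<delta> \<in> Diff G n"
  shows "isder G n (\<lambda>x. qval n (\<delta> (coset G n x)))"
proof -
  have DQ: "\<And>X. X \<in> QA G n \<Longrightarrow> \<delta> X \<in> QA G n" using D by (simp add: Diff_def)
  have Dadd: "\<And>X Y. X \<in> QA G n \<Longrightarrow> Y \<in> QA G n \<Longrightarrow> \<delta> (qadd G n X Y) = qadd G n (\<delta> X) (\<delta> Y)"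
    using D by (simp add: Diff_def)
  have Dsmul: "\<And>c X. X \<in> QA G n \<Longrightarrow> \<delta> (qsmul G n c X) = qsmul G n c (\<delta> X)"
    using D by (simp add: Diff_def)
  have Dmul: "\<And>X Y. X \<in> QA G n \<Longrightarrow> Y \<in> QA G n \<Longrightarrow>
     \<delta> (qmul G n X Y) = qadd G n (qmul G n (\<delta> X) Y) (qmul G n X (\<delta> Y))"
    using D by (simp add: Diff_def)
  let ?d = "\<lambda>x. qval n (\<delta> (coset G n x))"
  show ?thesis unfolding isder_def
  proof (intro conjI ballI allI impI)
    fix x :: "_ \<Rightarrow> 'k" assume x: "x \<in> PA G"
    show "?d x \<in> PA G" using x by (intro qval_PA fq DQ coset_QA)
    show "tr n (?d x) = ?d x" by (simp add: qval_tr)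
  next
    fix x y :: "_ \<Rightarrow> 'k" assume x: "x \<in> PA G" and y: "y \<in> PA G"
    show "?d (\<lambda>p. x p + y p) = (\<lambda>p. ?d x p + ?d y p)"
      using x y by (simp add: coset_add[OF fq] Dadd coset_QA qval_qadd[OF fq] DQ)
    show "?d (pmul G x y) = (\<lambda>p. tr n (pmul G (?d x) y) p + tr n (pmul G x (?d y)) p)"
    proof -
      have "?d (pmul G x y) = qval n (qadd G n (qmul G n (\<delta> (coset G n x)) (coset G n y))
                                 (qmul G n (coset G n x) (\<delta> (coset G n y))))"
        using x y by (simp add: coset_mul[OF fq] Dmul coset_QA)
      also have "\<dots> = (\<lambda>p. tr n (pmul G (?d x) (tr n y)) p + tr n (pmul G (tr n x) (?d y)) p)"
        using x y by (simp add: qval_qadd[OF fq] qval_qmul[OF fq] qmul_QA[OF fq] DQ coset_QA qval_coset[OF fq])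
      also have "\<dots> = (\<lambda>p. tr n (pmul G (?d x) y) p + tr n (pmul G x (?d y)) p)"
      proof -
        have f1: "finite (supp (?d x))" "finite (supp (?d y))"
          using x y by (auto intro!: PA_finite qval_PA[OF fq] DQ coset_QA)
        show ?thesis
          using x y tr_pmul_right[of "?d x" y n G] tr_pmul_left[of x "?d y" n G] f1 PA_finite[OF x] PA_finite[OF y]
          by simp
      qed
      finally show ?thesis .
    qed
    assume "tr n x = tr n y"
    then show "?d x = ?d y" using x y coset_eq_iff[OF fq x y, of n] by simp
  next
    fix c and x :: "_ \<Rightarrow> 'k" assume x: "x \<in> PA G"
    show "?d (\<lambda>p. c * x p) = (\<lambda>p. c * ?d x p)"
      using x by (simp add: coset_smul[OF fq] Dsmul coset_QA qval_qsmul[OF fq] DQ)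
  qed
qed

lemma isder_Diff:
  fixes \<delta> :: "('v,'e,'k::field) qelem \<Rightarrow> ('v,'e,'k) qelem"
  assumes fq: "finite_quiver G" and d: "isder G n d"
    and ext: "\<delta> \<in> extensional (QA G n)"
    and DQ: "\<And>X. X \<in> QA G n \<Longrightarrow> \<delta> X \<in> QA G n"
    and Dv: "\<And>X. X \<in> QA G n \<Longrightarrow> qval n (\<delta> X) = d (qval n X)"
  shows "\<delta> \<in> Diff G n"
  unfolding Diff_def
proof (intro CollectI conjI ballI allI ext DQ)
  fix X Y :: "('v,'e,'k) qelem" assume X: "X \<in> QA G n" and Y: "Y \<in> QA G n"
  have qX: "qval n X \<in> PA G" and qY: "qval n Y \<in> PA G" using X Y fq by (auto intro: qval_PA)
  show "\<delta> (qadd G n X Y) = qadd G n (\<delta> X) (\<delta> Y)"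
    by (rule QA_eq[OF fq, of _ n]) (use X Y qX qY in \<open>auto simp: DQ qadd_QA[OF fq] Dv qval_qadd[OF fq] isderD(3)[OF d]\<close>)
  show "\<delta> (qmul G n X Y) = qadd G n (qmul G n (\<delta> X) Y) (qmul G n X (\<delta> Y))"
  proof (rule QA_eq[OF fq, of _ n])
    show "\<delta> (qmul G n X Y) \<in> QA G n" using X Y by (simp add: DQ qmul_QA[OF fq])
    show "qadd G n (qmul G n (\<delta> X) Y) (qmul G n X (\<delta> Y)) \<in> QA G n"
      using X Y by (simp add: DQ qmul_QA[OF fq] qadd_QA[OF fq])
    have "qval n (\<delta> (qmul G n X Y)) = d (tr n (pmul G (qval n X) (qval n Y)))"
      using X Y by (simp add: Dv qmul_QA[OF fq] qval_qmul[OF fq])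
    also have "\<dots> = d (pmul G (qval n X) (qval n Y))"
      by (rule isderD(6)[OF d]) (use qX qY in \<open>auto intro: tr_PA pmul_PA\<close>)
    also have "\<dots> = qval n (qadd G n (qmul G n (\<delta> X) Y) (qmul G n X (\<delta> Y)))"
      using X Y qX qY by (simp add: isderD(5)[OF d] qval_qadd[OF fq] qval_qmul[OF fq] DQ qmul_QA[OF fq] Dv)
    finally show "qval n (\<delta> (qmul G n X Y)) = qval n (qadd G n (qmul G n (\<delta> X) Y) (qmul G n X (\<delta> Y)))" .
  qed
next
  fix c and X :: "('v,'e,'k) qelem" assume X: "X \<in> QA G n"
  have qX: "qval n X \<in> PA G" using X fq by (auto intro: qval_PA)
  show "\<delta> (qsmul G n c X) = qsmul G n c (\<delta> X)"
    by (rule QA_eq[OF fq, of _ n]) (use X qX in \<open>auto simp: DQ qsmul_QA[OF fq] Dv qval_qsmul[OF fq] isderD(4)[OF d]\<close>)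
qed




lemma isder_lin:
  fixes F :: "'i \<Rightarrow> ((('v,'e) path \<Rightarrow> 'k::field) \<Rightarrow> (('v,'e) path \<Rightarrow> 'k))"
  assumes I: "finite I" and F: "\<And>i. i \<in> I \<Longrightarrow> isder G n (F i)"
  shows "isder G n (\<lambda>x p. \<Sum>i\<in>I. c i * F i x p)"
  unfolding isder_def
proof (intro conjI ballI allI impI)
  fix x :: "_ \<Rightarrow> 'k" assume x: "x \<in> PA G"
  show "(\<lambda>p. \<Sum>i\<in>I. c i * F i x p) \<in> PA G"
    using I x F by (intro sum_PA smul_PA) (auto intro: isderD(1))
  show "tr n (\<lambda>p. \<Sum>i\<in>I. c i * F i x p) = (\<lambda>p. \<Sum>i\<in>I. c i * F i x p)"
    unfolding tr_sum tr_smul using isderD(2)[OF F x] by simp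
next
  fix x y :: "_ \<Rightarrow> 'k" assume x: "x \<in> PA G" and y: "y \<in> PA G"
  show "(\<lambda>p. \<Sum>i\<in>I. c i * F i (\<lambda>p. x p + y p) p) =
    (\<lambda>p. (\<Sum>i\<in>I. c i * F i x p) + (\<Sum>i\<in>I. c i * F i y p))"
    using isderD(3)[OF F x y] by (simp add: sum.distrib distrib_left)
  have fx: "\<And>i. i \<in> I \<Longrightarrow> finite (supp (F i x))" "\<And>i. i \<in> I \<Longrightarrow> finite (supp (F i y))"
    using x y F by (auto intro: PA_finite isderD(1))
  have "(\<lambda>p. tr n (pmul G (\<lambda>p. \<Sum>i\<in>I. c i * F i x p) y) p + tr n (pmul G x (\<lambda>p. \<Sum>i\<in>I. c i * F i y p)) p)
      = (\<lambda>p. \<Sum>i\<in>I. c i * (tr n (pmul G (F i x) y) p + tr n (pmul G x (F i y)) p))"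
  proof -
    have L: "pmul G (\<lambda>p. \<Sum>i\<in>I. c i * F i x p) y = (\<lambda>p. \<Sum>i\<in>I. c i * pmul G (F i x) y p)"
      by (rule pmul_lin_left) (use I fx PA_finite[OF y] in auto)
    have R: "pmul G x (\<lambda>p. \<Sum>i\<in>I. c i * F i y p) = (\<lambda>p. \<Sum>i\<in>I. c i * pmul G x (F i y) p)"
      by (rule pmul_lin_right) (use I fx PA_finite[OF x] in auto)
    show ?thesis unfolding L R tr_sum tr_smul by (simp add: sum.distrib distrib_left)
  qed
  also have "\<dots> = (\<lambda>p. \<Sum>i\<in>I. c i * F i (pmul G x y) p)"
    using isderD(5)[OF F x y] by simp
  finally show "(\<lambda>p. \<Sum>i\<in>I. c i * F i (pmul G x y) p) =
    (\<lambda>p. tr n (pmul G (\<lambda>p. \<Sum>i\<in>I. c i * F i x p) y) p + tr n (pmul G x (\<lambda>p. \<Sum>i\<in>I. c i * F i y p)) p)"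
    by simp
  assume "tr n x = tr n y"
  then show "(\<lambda>p. \<Sum>i\<in>I. c i * F i x p) = (\<lambda>p. \<Sum>i\<in>I. c i * F i y p)"
    using isderD(6)[OF F x y] by simp
next
  fix a and x :: "_ \<Rightarrow> 'k" assume x: "x \<in> PA G"
  show "(\<lambda>p. \<Sum>i\<in>I. c i * F i (\<lambda>p. a * x p) p) = (\<lambda>p. a * (\<Sum>i\<in>I. c i * F i x p))"
    using isderD(4)[OF F x] by (simp add: sum_distrib_left mult.left_commute)
qed

lemma isder_diff:
  assumes "isder G n d1" "isder G n d2"
  shows "isder G n (\<lambda>x p. d1 x p - d2 x p)"
proof -
  have "isder G n (\<lambda>x p. \<Sum>b\<in>{True, False}. (if b then 1 else -1) * (if b then d1 else d2) x p)"
    by (rule isder_lin) (use assms in auto)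
  moreover have "(\<lambda>x p. \<Sum>b\<in>{True, False}. (if b then 1 else -1) * (if b then d1 else d2) x p)
     = (\<lambda>x p. d1 x p - d2 x p)" by (simp add: fun_eq_iff)
  ultimately show ?thesis by simp
qed

abbreviation ev :: "'v \<Rightarrow> (('v,'e) path \<Rightarrow> 'k::field)" where
  "ev w \<equiv> bas (w, [])"

lemma ev_PA: "w \<in> verts G \<Longrightarrow> (ev w :: _ \<Rightarrow> 'k::field) \<in> PA G"
  by (rule bas_PA) (simp add: is_path_def)

lemma ev_idem: "pmul G (ev w) (ev w) = (ev w :: _ \<Rightarrow> 'k::field)"
  by (simp add: pmul_bas_bas pend_def pjoin_def)

lemma ev_orth: "v \<noteq> w \<Longrightarrow> pmul G (ev v) (ev w) = (\<lambda>_. 0 :: 'k::field)"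
  by (simp add: pmul_bas_bas pend_def)

lemma vertex_xor:
  fixes d :: "(('v,'e) path \<Rightarrow> 'k::field) \<Rightarrow> _"
  assumes d: "isder G n d" and w: "w \<in> verts G" and nz: "d (ev w) q \<noteq> 0"
  shows "(pend G q = w) \<noteq> (fst q = w)"
proof -
  have ew: "ev w \<in> PA G" using w by (rule ev_PA)
  have fin: "finite (supp (d (ev w)))" using isderD(1)[OF d ew] by (rule PA_finite)
  have short: "plen q < n" using isder_short[OF d ew] nz by (meson not_le)
  have "d (ev w) = d (pmul G (ev w) (ev w))" by (simp add: ev_idem)
  also have "\<dots> = (\<lambda>p. tr n (pmul G (d (ev w)) (ev w)) p + tr n (pmul G (ev w) (d (ev w))) p)"
    by (rule isderD(5)[OF d ew ew])
  finally have E: "d (ev w) = (\<lambda>p. tr n (pmul G (d (ev w)) (ev w)) p + tr n (pmul G (ev w) (d (ev w))) p)" .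
  have "d (ev w) q = tr n (pmul G (d (ev w)) (ev w)) q + tr n (pmul G (ev w) (d (ev w))) q"
    using fun_cong[OF E, of q] by simp
  also have "\<dots> = (if pend G q = w then d (ev w) q else 0) + (if fst q = w then d (ev w) q else 0)"
    using short fin by (simp add: tr_def pmul_vert_left pmul_vert_right)
  finally have "d (ev w) q = (if pend G q = w then d (ev w) q else 0) + (if fst q = w then d (ev w) q else 0)" .
  then show ?thesis using nz by (auto split: if_splits)
qed

lemma vertex_rel:
  fixes d :: "(('v,'e) path \<Rightarrow> 'k::field) \<Rightarrow> _"
  assumes d: "isder G n d" and v: "v \<in> verts G" and w: "w \<in> verts G" and vw: "v \<noteq> w"
  shows "(if pend G q = w then d (ev v) q else 0) + (if fst q = v then d (ev w) q else 0) = 0"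
proof -
  have ev: "ev v \<in> PA G" "ev w \<in> PA G" using v w by (auto intro: ev_PA)
  have fin: "finite (supp (d (ev v)))" "finite (supp (d (ev w)))"
    using isderD(1)[OF d ev(1)] isderD(1)[OF d ev(2)] by (auto intro: PA_finite)
  show ?thesis
  proof (cases "plen q < n")
    case True
    have "(\<lambda>_. 0) = d (pmul G (ev v) (ev w))" using vw by (simp add: ev_orth isder_zero[OF d])
    also have "\<dots> = (\<lambda>p. tr n (pmul G (d (ev v)) (ev w)) p + tr n (pmul G (ev v) (d (ev w))) p)"
      by (rule isderD(5)[OF d ev])
    finally have E: "(\<lambda>_. 0) = (\<lambda>p. tr n (pmul G (d (ev v)) (ev w)) p + tr n (pmul G (ev v) (d (ev w))) p)" .
    have "0 = tr n (pmul G (d (ev v)) (ev w)) q + tr n (pmul G (ev v) (d (ev w))) q"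
      using fun_cong[OF E, of q] by simp
    then have "tr n (pmul G (d (ev v)) (ev w)) q + tr n (pmul G (ev v) (d (ev w))) q = 0" by simp
    then show ?thesis using True fin by (simp add: tr_def pmul_vert_left pmul_vert_right)
  next
    case False
    then show ?thesis using isder_short[OF d ev(1), of q] isder_short[OF d ev(2), of q] by simp
  qed
qed

lemma loop_zero:
  fixes d :: "(('v,'e) path \<Rightarrow> 'k::field_char_0) \<Rightarrow> _"
  assumes fq: "finite_quiver G" and d: "isder G n d" and n: "1 \<le> n"
    and a: "a \<in> arcs G" "qsrc G a = v" "qtgt G a = v"
  shows "d (bas (v, [a])) (v, []) = 0"
proof -
  define pw :: "nat \<Rightarrow> ('v,'e) path" where "pw m = (v, replicate m a)" for m
  have vV: "v \<in> verts G" using fq a by (auto simp: finite_quiver_def)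
  have chain: "chain G v (replicate m a)" for m using a by (induction m) auto
  have pwp: "is_path G (pw m)" for m using vV a chain by (auto simp: pw_def is_path_def)
  have pend_pw: "pend G (pw m) = v" for m using a by (auto simp: pw_def pend_def)
  have pwPA: "bas (pw m) \<in> PA G" for m using pwp by (rule bas_PA)
  have aPA: "bas (v,[a]) \<in> PA G" using vV a by (intro bas_PA) (auto simp: is_path_def)
  define c where "c = d (bas (v, [a])) (v, [])"
  have mul: "bas (pw (Suc m)) = pmul G (bas (pw m)) (bas (v,[a]))" for m
    using pend_pw[of m] by (simp add: pmul_bas_bas pjoin_def pw_def replicate_append_same)
  have fin: "finite (supp (d (bas (pw m))))" for m using isderD(1)[OF d pwPA] by (rule PA_finite)
  have fina: "finite (supp (d (bas (v,[a]))))" using isderD(1)[OF d aPA] by (rule PA_finite)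
  have step: "d (bas (pw (Suc (Suc k)))) (pw (Suc k)) = d (bas (pw (Suc k))) (pw k) + c"
    if "Suc k < n" for k
  proof -
    have "d (bas (pw (Suc (Suc k)))) = (\<lambda>p. tr n (pmul G (d (bas (pw (Suc k)))) (bas (v,[a]))) p +
                  tr n (pmul G (bas (pw (Suc k))) (d (bas (v,[a])))) p)"
      unfolding mul[of "Suc k"] by (rule isderD(5)[OF d pwPA aPA])
    moreover have "pmul G (d (bas (pw (Suc k)))) (bas (v,[a])) (pw (Suc k)) = d (bas (pw (Suc k))) (pw k)"
    proof -
      have "pw (Suc k) = (v, replicate k a @ snd (v,[a]))" by (simp add: pw_def replicate_append_same)
      then show ?thesis using pmul_bas_right_at[OF fin[of "Suc k"], of G "(v,[a])" v "replicate k a"]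
        pend_pw[of k] by (simp add: pw_def)
    qed
    moreover have "pmul G (bas (pw (Suc k))) (d (bas (v,[a]))) (pw (Suc k)) = c"
      using pmul_bas_left_at[OF fina, of G "pw (Suc k)" "[]"] pend_pw[of "Suc k"]
      by (simp add: pw_def c_def)
    moreover have "plen (pw (Suc k)) < n" using that by (simp add: pw_def plen_def)
    ultimately show ?thesis by (simp add: tr_def)
  qed
  have ind: "Suc k \<le> n \<longrightarrow> d (bas (pw (Suc k))) (pw k) = of_nat (Suc k) * c" for k
  proof (induction k)
    case 0 then show ?case by (simp add: pw_def c_def)
  next
    case (Suc k)
    show ?case
    proof
      assume "Suc (Suc k) \<le> n"
      then have "Suc k < n" by simp
      then show "d (bas (pw (Suc (Suc k)))) (pw (Suc k)) = of_nat (Suc (Suc k)) * c"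
        using step Suc by (simp add: algebra_simps)
    qed
  qed
  obtain k where k: "n = Suc k" using n by (cases n) auto
  have "(bas (pw n) :: _ \<Rightarrow> 'k) \<in> knG G n" using pwp by (intro knG.gen) (auto simp: pw_def plen_def)
  then have "tr n (bas (pw n) :: _ \<Rightarrow> 'k) = (\<lambda>_. 0)" using knG_iff[OF fq, of "bas (pw n)" n] by blast
  then have "tr n (bas (pw n) :: _ \<Rightarrow> 'k) = tr n (\<lambda>_. 0)" by simp
  then have "d (bas (pw n)) = d (\<lambda>_. 0)" using isderD(6)[OF d pwPA] by simp
  then have "d (bas (pw n)) = (\<lambda>_. 0)" using isder_zero[OF d] by simp
  then have "of_nat n * c = 0" using ind[of k] k by simp
  then show ?thesis using n by (simp add: c_def)
qed

lemma arc_parallel: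
  fixes d :: "(('v,'e) path \<Rightarrow> 'k::field) \<Rightarrow> _"
  assumes fq: "finite_quiver G" and d: "isder G n d" and dv: "\<And>v. v \<in> verts G \<Longrightarrow> d (ev v) = (\<lambda>_. 0)"
    and a: "a \<in> arcs G" and nz: "d (bas (apath G a)) q \<noteq> 0"
  shows "fst q = qsrc G a \<and> pend G q = qtgt G a"
proof -
  let ?x = "bas (apath G a) :: _ \<Rightarrow> 'k"
  have sV: "qsrc G a \<in> verts G" and tV: "qtgt G a \<in> verts G" using fq a by (auto simp: finite_quiver_def)
  have xPA: "?x \<in> PA G" using a sV by (intro bas_PA) (auto simp: is_path_def apath_def)
  have es: "ev (qsrc G a) \<in> PA G" and et: "ev (qtgt G a) \<in> PA G" using sV tV by (auto intro: ev_PA)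
  have fin: "finite (supp (d ?x))" using isderD(1)[OF d xPA] by (rule PA_finite)
  have short: "plen q < n" using isder_short[OF d xPA] nz by (meson not_le)
  have "?x = pmul G (ev (qsrc G a)) ?x" by (simp add: pmul_bas_bas apath_def pend_def pjoin_def)
  then have "d ?x = (\<lambda>p. tr n (pmul G (d (ev (qsrc G a))) ?x) p + tr n (pmul G (ev (qsrc G a)) (d ?x)) p)"
    using isderD(5)[OF d es xPA] by simp
  then have "d ?x q = tr n (pmul G (d (ev (qsrc G a))) ?x) q + tr n (pmul G (ev (qsrc G a)) (d ?x)) q"
    by (rule fun_cong)
  then have 1: "d ?x q = (if fst q = qsrc G a then d ?x q else 0)"
    using dv[OF sV] short fin by (simp add: tr_def pmul_vert_left)
  have "?x = pmul G ?x (ev (qtgt G a))" by (simp add: pmul_bas_bas apath_def pend_def pjoin_def)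
  then have "d ?x = (\<lambda>p. tr n (pmul G (d ?x) (ev (qtgt G a))) p + tr n (pmul G ?x (d (ev (qtgt G a)))) p)"
    using isderD(5)[OF d xPA et] by simp
  then have "d ?x q = tr n (pmul G (d ?x) (ev (qtgt G a))) q + tr n (pmul G ?x (d (ev (qtgt G a)))) q"
    by (rule fun_cong)
  then have 2: "d ?x q = (if pend G q = qtgt G a then d ?x q else 0)"
    using dv[OF tV] short fin by (simp add: tr_def pmul_vert_right)
  show ?thesis using 1 2 nz by (auto split: if_splits)
qed

lemma isder_unique:
  fixes d :: "(('v,'e) path \<Rightarrow> 'k::field) \<Rightarrow> _"
  assumes fq: "finite_quiver G" and d: "isder G n d" and dv: "\<And>v. v \<in> verts G \<Longrightarrow> d (ev v) = (\<lambda>_. 0)"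
    and da: "\<And>a. a \<in> arcs G \<Longrightarrow> d (bas (apath G a)) = (\<lambda>_. 0)"
    and x: "x \<in> PA G"
  shows "d x = (\<lambda>_. 0)"
proof -
  have bp: "is_path G (v, l) \<Longrightarrow> d (bas (v, l)) = (\<lambda>_. 0)" for v l
  proof (induction l arbitrary: v)
    case Nil then show ?case using dv by (simp add: is_path_def)
  next
    case (Cons a l)
    then have a: "a \<in> arcs G" "qsrc G a = v" "v \<in> verts G" "set l \<subseteq> arcs G" "chain G (qtgt G a) l"
      by (auto simp: is_path_def)
    have p1: "is_path G (v, [a])" using a by (auto simp: is_path_def)
    have p2: "is_path G (qtgt G a, l)" using is_path_split(2)[of G v "[a]" l] Cons.prems fq by (simp add: pend_def)
    have eq: "bas (v, a # l) = pmul G (bas (v,[a])) (bas (qtgt G a, l))"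
      by (simp add: pmul_bas_bas pend_def pjoin_def)
    have "d (bas (v, a # l)) = (\<lambda>p. tr n (pmul G (d (bas (v,[a]))) (bas (qtgt G a, l))) p +
                  tr n (pmul G (bas (v,[a])) (d (bas (qtgt G a, l)))) p)"
      unfolding eq by (rule isderD(5)[OF d bas_PA[OF p1] bas_PA[OF p2]])
    moreover have "d (bas (v,[a])) = (\<lambda>_. 0)" using da[OF a(1)] a(2) by (simp add: apath_def)
    ultimately show ?case using Cons.IH[OF p2] by simp
  qed
  have "d x = d (\<lambda>p. \<Sum>q\<in>supp x. x q * bas q p)" using x by (subst expand[of "supp x" x]) (auto simp: PA_def)
  also have "\<dots> = (\<lambda>p. \<Sum>q\<in>supp x. d (\<lambda>p. x q * bas q p) p)"
    by (rule isder_sum_fun[OF d]) (use x PA_finite[OF x] in \<open>auto intro!: smul_PA bas_PA intro: PA_path[OF x] simp: supp_def\<close>)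
  also have "\<dots> = (\<lambda>_. 0)"
  proof -
    have "d (\<lambda>p. x q * bas q p) = (\<lambda>_. 0)" if "q \<in> supp x" for q
    proof -
      have qp: "is_path G q" using x that by (auto simp: PA_def)
      then have "d (\<lambda>p. x q * bas q p) = (\<lambda>p. x q * d (bas q) p)" by (intro isderD(4)[OF d] bas_PA)
      also have "\<dots> = (\<lambda>_. 0)" using bp[of "fst q" "snd q"] qp by simp
      finally show ?thesis .
    qed
    then show ?thesis by simp
  qed
  finally show ?thesis .
qed

section \<open>Inner derivations\<close>

definition ii :: "('v,'e) quiver \<Rightarrow> nat \<Rightarrow> ('v,'e) path \<Rightarrow> (('v,'e) path \<Rightarrow> 'k::field) \<Rightarrow> (('v,'e) path \<Rightarrow> 'k)" where
  "ii G n s x = (\<lambda>p. tr n (pmul G (bas s) x) p - tr n (pmul G x (bas s)) p)"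

lemma isder_ii:
  assumes s: "is_path G s"
  shows "isder G n (ii G n s :: _ \<Rightarrow> _ \<Rightarrow> 'k::field)"
  unfolding isder_def
proof (intro conjI ballI allI impI)
  have sPA: "bas s \<in> PA G" using s by (rule bas_PA)
  fix x :: "_ \<Rightarrow> 'k" assume x: "x \<in> PA G"
  show "ii G n s x \<in> PA G" unfolding ii_def using x sPA by (intro diff_PA tr_PA pmul_PA)
  show "tr n (ii G n s x) = ii G n s x" unfolding ii_def tr_diff by simp
next
  have fs: "finite (supp (bas s :: _ \<Rightarrow> 'k))" by simp
  fix x y :: "_ \<Rightarrow> 'k" assume x: "x \<in> PA G" and y: "y \<in> PA G"
  have fx: "finite (supp x)" and fy: "finite (supp y)" using x y by (auto intro: PA_finite)
  show "ii G n s (\<lambda>p. x p + y p) = (\<lambda>p. ii G n s x p + ii G n s y p)"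
    unfolding ii_def using fx fy fs by (simp add: pmul_add_left pmul_add_right tr_add algebra_simps)
  show "ii G n s (pmul G x y) = (\<lambda>p. tr n (pmul G (ii G n s x) y) p + tr n (pmul G x (ii G n s y)) p)"
  proof -
    have f1: "finite (supp (pmul G (bas s) x))" "finite (supp (pmul G x (bas s)))"
      "finite (supp (pmul G (bas s) y))" "finite (supp (pmul G y (bas s)))"
      using fx fy fs by (auto intro: finite_supp_pmul)
    have fd1: "finite (supp (\<lambda>p. pmul G (bas s) x p - pmul G x (bas s) p))"
      by (rule PA_finite[of _ G], intro diff_PA pmul_PA bas_PA x y s)
    have fd2: "finite (supp (\<lambda>p. pmul G (bas s) y p - pmul G y (bas s) p))"
      by (rule PA_finite[of _ G], intro diff_PA pmul_PA bas_PA x y s)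
    have A: "tr n (pmul G (ii G n s x) y) = (\<lambda>p. tr n (pmul G (pmul G (bas s) x) y) p - tr n (pmul G (pmul G x (bas s)) y) p)"
    proof -
      have "tr n (pmul G (ii G n s x) y) = tr n (pmul G (tr n (\<lambda>p. pmul G (bas s) x p - pmul G x (bas s) p)) y)"
        by (simp add: ii_def tr_diff)
      also have "\<dots> = tr n (pmul G (\<lambda>p. pmul G (bas s) x p - pmul G x (bas s) p) y)"
        by (rule tr_pmul_left[symmetric]) (use fd1 fy in auto)
      also have "\<dots> = (\<lambda>p. tr n (pmul G (pmul G (bas s) x) y) p - tr n (pmul G (pmul G x (bas s)) y) p)"
        using f1 fy by (simp add: pmul_diff_left tr_diff)
      finally show ?thesis .
    qed
    have B: "tr n (pmul G x (ii G n s y)) = (\<lambda>p. tr n (pmul G x (pmul G (bas s) y)) p - tr n (pmul G x (pmul G y (bas s))) p)"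
    proof -
      have "tr n (pmul G x (ii G n s y)) = tr n (pmul G x (tr n (\<lambda>p. pmul G (bas s) y p - pmul G y (bas s) p)))"
        by (simp add: ii_def tr_diff)
      also have "\<dots> = tr n (pmul G x (\<lambda>p. pmul G (bas s) y p - pmul G y (bas s) p))"
        by (rule tr_pmul_right[symmetric]) (use fd2 fx in auto)
      also have "\<dots> = (\<lambda>p. tr n (pmul G x (pmul G (bas s) y)) p - tr n (pmul G x (pmul G y (bas s))) p)"
        using f1 fx by (simp add: pmul_diff_right tr_diff)
      finally show ?thesis .
    qed
    have C: "ii G n s (pmul G x y) = (\<lambda>p. tr n (pmul G (bas s) (pmul G x y)) p - tr n (pmul G (pmul G x y) (bas s)) p)"
      by (simp add: ii_def)
    show ?thesis unfolding A B C
      using pmul_assoc[OF fs fx fy, of G] pmul_assoc[OF fx fs fy, of G] pmul_assoc[OF fx fy fs, of G]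
      by simp
  qed
  assume "tr n x = tr n y"
  then show "ii G n s x = ii G n s y"
    unfolding ii_def using tr_pmul_left[OF fx fs, of n G] tr_pmul_left[OF fy fs, of n G]
      tr_pmul_right[OF fs fx, of n G] tr_pmul_right[OF fs fy, of n G] by simp
next
  fix c and x :: "_ \<Rightarrow> 'k" assume x: "x \<in> PA G"
  show "ii G n s (\<lambda>p. c * x p) = (\<lambda>p. c * ii G n s x p)"
    unfolding ii_def by (simp add: pmul_smul_left pmul_smul_right tr_smul right_diff_distrib)
qed




fun derl :: "('v,'e) quiver \<Rightarrow> 'e \<Rightarrow> ('v,'e) path \<Rightarrow> 'v \<Rightarrow> 'e list \<Rightarrow> (('v,'e) path \<Rightarrow> 'k::field)" where
  "derl G r s v [] = (\<lambda>_. 0)"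
| "derl G r s v (a # l) = (\<lambda>p. pmul G (if a = r then bas s else (\<lambda>_. 0)) (bas (qtgt G a, l)) p
                              + pmul G (bas (v,[a])) (derl G r s (qtgt G a) l) p)"

lemma pend_Cons: "pend G (v, a # l) = pend G (qtgt G a, l)"
  by (simp add: pend_def)

lemma is_path_Cons:
  assumes "finite_quiver G" "is_path G (v, a # l)"
  shows "is_path G (qtgt G a, l)" "a \<in> arcs G" "qsrc G a = v" "v \<in> verts G"
  using is_path_split(2)[of G v "[a]" l] assms by (auto simp: pend_def is_path_def)

context
  fixes G :: "('v,'e) quiver" and r :: 'e and s :: "('v,'e) path"
  assumes fq: "finite_quiver G" and rA: "r \<in> arcs G" and sp: "is_path G s"
    and par: "parallel G r s" and sl: "1 \<le> plen s"
begin

lemma derl_PA: "is_path G (v, l) \<Longrightarrow> (derl G r s v l :: _ \<Rightarrow> 'k::field) \<in> PA G"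
proof (induction l arbitrary: v)
  case Nil then show ?case by simp
next
  case (Cons a l)
  note c = is_path_Cons[OF fq Cons.prems]
  have p1: "is_path G (v,[a])" using c by (auto simp: is_path_def)
  have "(if a = r then bas s else (\<lambda>_. 0)) \<in> (PA G :: (_ \<Rightarrow> 'k) set)" using sp by (auto intro: bas_PA)
  then show ?case using Cons.IH[OF c(1)] c p1
    by (simp only: derl.simps) (intro add_PA pmul_PA bas_PA; simp)
qed

lemma derl_supp:
  "is_path G (v, l) \<Longrightarrow> (derl G r s v l :: _ \<Rightarrow> 'k::field) q \<noteq> 0 \<Longrightarrow>
     fst q = v \<and> pend G q = pend G (v, l) \<and> length l \<le> plen q"
proof (induction l arbitrary: v q)
  case Nil then show ?case by simp
next
  case (Cons a l)
  note c = is_path_Cons[OF fq Cons.prems(1)]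
  from Cons.prems(2) have
    "pmul G (if a = r then bas s else (\<lambda>_. 0)) (bas (qtgt G a, l)) q \<noteq> (0::'k) \<or>
     pmul G (bas (v,[a])) (derl G r s (qtgt G a) l) q \<noteq> (0::'k)"
    by auto
  then show ?case
  proof
    assume "pmul G (if a = r then bas s else (\<lambda>_. 0)) (bas (qtgt G a, l)) q \<noteq> (0::'k)"
    then obtain q1 r1 where h: "(if a = r then bas s else (\<lambda>_. 0)) q1 \<noteq> (0::'k)" "bas (qtgt G a, l) r1 \<noteq> (0::'k)"
      "pend G q1 = fst r1" "pjoin q1 r1 = q" using pmul_nz by blast
    then have ar: "a = r" and q1: "q1 = s" and r1: "r1 = (qtgt G a, l)"
      by (auto simp: bas_def split: if_splits)
    have "fst q = v" using h(4) q1 par ar c by (auto simp: parallel_def pstart_def)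
    moreover have "pend G q = pend G (v, a # l)"
    proof -
      have "pend G q = pend G r1" using pend_pjoin[OF h(3)] h(4) by simp
      then show ?thesis using r1 by (simp add: pend_Cons)
    qed
    moreover have "length (a # l) \<le> plen q" using h(4) q1 r1 sl by (auto simp: plen_def)
    ultimately show ?thesis by blast
  next
    assume "pmul G (bas (v,[a])) (derl G r s (qtgt G a) l) q \<noteq> (0::'k)"
    then obtain q1 r1 where h: "bas (v,[a]) q1 \<noteq> (0::'k)" "derl G r s (qtgt G a) l r1 \<noteq> (0::'k)"
      "pend G q1 = fst r1" "pjoin q1 r1 = q" using pmul_nz by blast
    then have q1: "q1 = (v,[a])" by (auto simp: bas_def split: if_splits)
    have IH: "fst r1 = qtgt G a \<and> pend G r1 = pend G (qtgt G a, l) \<and> length l \<le> plen r1"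
      using Cons.IH[OF c(1) h(2)] .
    show ?thesis using h(3,4) q1 IH by (auto simp: pend_pjoin pend_Cons plen_def)
  qed
qed

lemma derl_fin: "is_path G (v, l) \<Longrightarrow> finite (supp (derl G r s v l :: _ \<Rightarrow> 'k::field))"
  by (rule PA_finite[OF derl_PA])

lemma derl_leibniz:
  fixes l m :: "'e list"
  assumes "is_path G (v, l)" "is_path G (u, m)" "pend G (v, l) = u"
  shows "(derl G r s v (l @ m) :: _ \<Rightarrow> 'k::field) =
     (\<lambda>w. pmul G (derl G r s v l) (bas (u, m)) w + pmul G (bas (v, l)) (derl G r s u m) w)"
  using assms
proof (induction l arbitrary: v)
  case Nil
  have "pmul G (bas (v, [])) (derl G r s u m) w = (derl G r s u m :: _ \<Rightarrow> 'k) w" for w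
  proof -
    have uv: "u = v" using Nil by (simp add: pend_def)
    have "pmul G (bas (v, [])) (derl G r s u m) w = (if fst w = v then (derl G r s u m :: _ \<Rightarrow> 'k) w else 0)"
      by (rule pmul_vert_left[OF derl_fin[OF Nil(2)]])
    then show ?thesis using derl_supp[OF Nil(2), of w] uv by auto
  qed
  then show ?case using Nil by (simp add: pend_def fun_eq_iff)
next
  case (Cons a l)
  note c = is_path_Cons[OF fq Cons.prems(1)]
  let ?S = "(if a = r then bas s else (\<lambda>_. 0)) :: _ \<Rightarrow> 'k"
  let ?t = "qtgt G a"
  have fS: "finite (supp ?S)"
  proof (cases "a = r")
    case True then show ?thesis by simp
  next
    case False then show ?thesis by (simp add: supp_def)
  qed
  have fd: "finite (supp (derl G r s ?t l :: _ \<Rightarrow> 'k))" using derl_fin[OF c(1)] .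
  have fdm: "finite (supp (derl G r s u m :: _ \<Rightarrow> 'k))" using derl_fin[OF Cons.prems(2)] .
  have pe: "pend G (?t, l) = u" using Cons.prems(3) by (simp add: pend_Cons)
  have IH: "(derl G r s ?t (l @ m) :: _ \<Rightarrow> 'k) =
     (\<lambda>w. pmul G (derl G r s ?t l) (bas (u, m)) w + pmul G (bas (?t, l)) (derl G r s u m) w)"
    using Cons.IH[OF c(1) Cons.prems(2) pe] .
  have b1: "bas (?t, l @ m) = (pmul G (bas (?t, l)) (bas (u, m)) :: _ \<Rightarrow> 'k)"
    using pe by (simp add: pmul_bas_bas pjoin_def)
  have b2: "bas (v, a # l) = (pmul G (bas (v, [a])) (bas (?t, l)) :: _ \<Rightarrow> 'k)"
    by (simp add: pmul_bas_bas pjoin_def pend_def)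
  have "(derl G r s v ((a # l) @ m) :: _ \<Rightarrow> 'k) =
     (\<lambda>p. pmul G ?S (pmul G (bas (?t, l)) (bas (u, m))) p +
          pmul G (bas (v,[a])) (\<lambda>w. pmul G (derl G r s ?t l) (bas (u, m)) w + pmul G (bas (?t, l)) (derl G r s u m) w) p)"
    using b1 IH by simp
  also have "\<dots> = (\<lambda>p. pmul G (pmul G ?S (bas (?t, l))) (bas (u, m)) p +
          (pmul G (pmul G (bas (v,[a])) (derl G r s ?t l)) (bas (u, m)) p +
           pmul G (pmul G (bas (v,[a])) (bas (?t, l))) (derl G r s u m) p))"
    using fS fd fdm
    by (simp add: pmul_add_right finite_supp_pmul pmul_assoc)
  also have "\<dots> = (\<lambda>w. pmul G (derl G r s v (a # l)) (bas (u, m)) w + pmul G (bas (v, a # l)) (derl G r s u m) w)"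
    using fS fd fdm b2 by (simp add: pmul_add_left finite_supp_pmul add.assoc)
  finally show ?case .
qed

definition EE :: "(('v,'e) path \<Rightarrow> 'k::field) \<Rightarrow> (('v,'e) path \<Rightarrow> 'k)" where
  "EE x = (\<lambda>w. \<Sum>p\<in>supp x. x p * derl G r s (fst p) (snd p) w)"

lemma EE_alt:
  assumes "finite A" "supp x \<subseteq> A"
  shows "EE x = (\<lambda>w. \<Sum>p\<in>A. x p * derl G r s (fst p) (snd p) w)"
  unfolding EE_def by (rule ext, rule sum.mono_neutral_left) (use assms in \<open>auto simp: supp_def\<close>)

lemma EE_PA: "x \<in> PA G \<Longrightarrow> EE x \<in> PA G"
  unfolding EE_def
  by (intro sum_PA smul_PA derl_PA) (auto simp: PA_def supp_def)

lemma EE_add: "x \<in> PA G \<Longrightarrow> y \<in> PA G \<Longrightarrow> EE (\<lambda>p. x p + y p) = (\<lambda>w. EE x w + EE y w)"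
proof -
  assume x: "x \<in> PA G" and y: "y \<in> PA G"
  let ?A = "supp x \<union> supp y"
  have fA: "finite ?A" using x y by (auto simp: PA_def)
  show ?thesis
    using EE_alt[OF fA, of x] EE_alt[OF fA, of y] EE_alt[OF fA, of "\<lambda>p. x p + y p"] supp_add[of x y]
    by (simp add: sum.distrib distrib_right)
qed

lemma EE_smul: "x \<in> PA G \<Longrightarrow> EE (\<lambda>p. c * x p) = (\<lambda>w. c * EE x w)"
proof -
  assume x: "x \<in> PA G"
  have fA: "finite (supp x)" using x by (auto simp: PA_def)
  show ?thesis
    using EE_alt[OF fA, of x] EE_alt[OF fA, of "\<lambda>p. c * x p"] supp_smul[of c x]
    by (simp add: sum_distrib_left mult.assoc)
qed

lemma EE_zero: "EE (\<lambda>_. 0) = (\<lambda>_. 0)" by (simp add: EE_def supp_def)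

lemma EE_bas: "EE (bas p) = derl G r s (fst p) (snd p)"
  unfolding EE_def supp_bas by (simp add: bas_def)

lemma EE_lin:
  assumes "finite I" "\<And>i. i \<in> I \<Longrightarrow> F i \<in> PA G"
  shows "EE (\<lambda>p. \<Sum>i\<in>I. c i * F i p) = (\<lambda>w. \<Sum>i\<in>I. c i * EE (F i) w)"
  using assms
proof (induction I rule: finite_induct)
  case empty then show ?case by (simp add: EE_zero)
next
  case (insert a I)
  have "EE (\<lambda>p. \<Sum>i\<in>insert a I. c i * F i p) = EE (\<lambda>p. (\<lambda>p. c a * F a p) p + (\<lambda>p. \<Sum>i\<in>I. c i * F i p) p)"
    using insert by simp
  also have "\<dots> = (\<lambda>w. EE (\<lambda>p. c a * F a p) w + EE (\<lambda>p. \<Sum>i\<in>I. c i * F i p) w)"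
    by (rule EE_add) (use insert in \<open>auto intro!: smul_PA sum_PA\<close>)
  finally show ?case using insert by (simp add: EE_smul)
qed

lemma EE_diff: "x \<in> PA G \<Longrightarrow> y \<in> PA G \<Longrightarrow> EE (\<lambda>p. x p - y p) = (\<lambda>w. EE x w - EE y w)"
proof -
  assume x: "x \<in> PA G" and y: "y \<in> PA G"
  have "EE (\<lambda>p. x p + (\<lambda>p. (-1) * y p) p) = (\<lambda>w. EE x w + EE (\<lambda>p. (-1) * y p) w)"
    by (rule EE_add) (use x y smul_PA[OF y, of "-1"] in auto)
  then show ?thesis using EE_smul[OF y, of "-1"] by simp
qed

lemma EE_pmul_bas:
  assumes a: "is_path G a" and b: "is_path G b"
  shows "EE (pmul G (bas a) (bas b)) =
    (\<lambda>w. pmul G (derl G r s (fst a) (snd a)) (bas b) w + pmul G (bas a) (derl G r s (fst b) (snd b)) w :: 'k::field)"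
proof (cases "pend G a = fst b")
  case True
  have "EE (pmul G (bas a) (bas b)) = (derl G r s (fst a) (snd a @ snd b) :: _ \<Rightarrow> 'k)"
    using True by (simp add: pmul_bas_bas EE_bas)
  also have "\<dots> = (\<lambda>w. pmul G (derl G r s (fst a) (snd a)) (bas (fst b, snd b)) w +
                    pmul G (bas (fst a, snd a)) (derl G r s (fst b) (snd b)) w)"
    by (rule derl_leibniz) (use a b True in auto)
  finally show ?thesis by simp
next
  case False
  have z1: "pmul G (derl G r s (fst a) (snd a)) (bas b) w = (0::'k)" for w
  proof (rule ccontr)
    assume "pmul G (derl G r s (fst a) (snd a)) (bas b) w \<noteq> (0::'k)"
    then obtain q1 r1 where "derl G r s (fst a) (snd a) q1 \<noteq> (0::'k)" "bas b r1 \<noteq> (0::'k)" "pend G q1 = fst r1"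
      using pmul_nz by blast
    then show False using derl_supp[of "fst a" "snd a" q1] a False by (auto simp: bas_def split: if_splits)
  qed
  have z2: "pmul G (bas a) (derl G r s (fst b) (snd b)) w = (0::'k)" for w
  proof (rule ccontr)
    assume "pmul G (bas a) (derl G r s (fst b) (snd b)) w \<noteq> (0::'k)"
    then obtain q1 r1 where "bas a q1 \<noteq> (0::'k)" "derl G r s (fst b) (snd b) r1 \<noteq> (0::'k)" "pend G q1 = fst r1"
      using pmul_nz by blast
    then show False using derl_supp[of "fst b" "snd b" r1] b False by (auto simp: bas_def split: if_splits)
  qed
  show ?thesis using False z1 z2 by (simp add: pmul_bas_bas EE_zero)
qed

lemma EE_leibniz:
  assumes x: "x \<in> PA G" and y: "y \<in> PA G"
  shows "EE (pmul G x y) = (\<lambda>w. pmul G (EE x) y w + pmul G x (EE y) w :: 'k::field)"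
proof -
  have fx: "finite (supp x)" and fy: "finite (supp y)" using x y by (auto intro: PA_finite)
  have px: "\<And>a. a \<in> supp x \<Longrightarrow> is_path G a" and py: "\<And>b. b \<in> supp y \<Longrightarrow> is_path G b"
    using x y by (auto simp: PA_def)
  let ?d = "\<lambda>a. derl G r s (fst a) (snd a) :: _ \<Rightarrow> 'k"
  have fdl: "\<And>a. a \<in> supp x \<Longrightarrow> finite (supp (?d a))" "\<And>b. b \<in> supp y \<Longrightarrow> finite (supp (?d b))"
    using px py by (auto intro!: derl_fin)
  have inner: "\<And>a. a \<in> supp x \<Longrightarrow> (\<lambda>p. \<Sum>b\<in>supp y. y b * pmul G (bas a) (bas b) p) \<in> PA G"
    using px py fy by (intro sum_PA smul_PA pmul_PA bas_PA) auto
  have "EE (pmul G x y) = EE (\<lambda>p. \<Sum>a\<in>supp x. x a * (\<lambda>p. \<Sum>b\<in>supp y. y b * pmul G (bas a) (bas b) p) p)"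
    using pmul_exp2[OF fx fy, of G] by simp
  also have "\<dots> = (\<lambda>w. \<Sum>a\<in>supp x. x a * EE (\<lambda>p. \<Sum>b\<in>supp y. y b * pmul G (bas a) (bas b) p) w)"
    by (rule EE_lin) (use fx fy inner in auto)
  also have "\<dots> = (\<lambda>w. \<Sum>a\<in>supp x. x a * (\<Sum>b\<in>supp y. y b * EE (pmul G (bas a) (bas b)) w))"
  proof -
    have "EE (\<lambda>p. \<Sum>b\<in>supp y. y b * pmul G (bas a) (bas b) p) = (\<lambda>w. \<Sum>b\<in>supp y. y b * EE (pmul G (bas a) (bas b)) w)"
      if "a \<in> supp x" for a
      by (rule EE_lin) (use fy px[OF that] py in \<open>auto intro!: pmul_PA bas_PA\<close>)
    then show ?thesis by (intro ext sum.cong refl) simp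
  qed
  also have "\<dots> = (\<lambda>w. \<Sum>a\<in>supp x. x a * (\<Sum>b\<in>supp y. y b * (pmul G (?d a) (bas b) w + pmul G (bas a) (?d b) w)))"
    by (rule ext, rule sum.cong[OF refl], rule arg_cong[where f="(*) _"], rule sum.cong[OF refl])
       (simp add: EE_pmul_bas px py)
  also have "\<dots> = (\<lambda>w. (\<Sum>a\<in>supp x. x a * (\<Sum>b\<in>supp y. y b * pmul G (?d a) (bas b) w)) +
                      (\<Sum>a\<in>supp x. x a * (\<Sum>b\<in>supp y. y b * pmul G (bas a) (?d b) w)))"
    by (simp add: distrib_left sum.distrib)
  also have "\<dots> = (\<lambda>w. pmul G (EE x) y w + pmul G x (EE y) w)"
  proof (rule ext)
    fix w
    have E1: "pmul G (EE x) y w = (\<Sum>a\<in>supp x. x a * (\<Sum>b\<in>supp y. y b * pmul G (?d a) (bas b) w))"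
    proof -
      have "pmul G (EE x) y = (\<lambda>w. \<Sum>a\<in>supp x. x a * pmul G (?d a) y w)"
        unfolding EE_def by (rule pmul_lin_left) (use fx fdl fy in auto)
      then show ?thesis using fdl(1) by (simp add: pmul_exp_right[OF fy order_refl])
    qed
    have E2: "pmul G x (EE y) w = (\<Sum>a\<in>supp x. x a * (\<Sum>b\<in>supp y. y b * pmul G (bas a) (?d b) w))"
    proof -
      have "pmul G x (EE y) w = (\<Sum>a\<in>supp x. x a * pmul G (bas a) (EE y) w)"
        by (rule pmul_exp_left) (use fx EE_PA[OF y] PA_finite in auto)
      also have "\<dots> = (\<Sum>a\<in>supp x. x a * (\<Sum>b\<in>supp y. y b * pmul G (bas a) (?d b) w))"
      proof (rule sum.cong[OF refl])
        fix a assume "a \<in> supp x"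
        have "pmul G (bas a) (EE y) = (\<lambda>w. \<Sum>b\<in>supp y. y b * pmul G (bas a) (?d b) w)"
          unfolding EE_def by (rule pmul_lin_right) (use fy fdl in auto)
        then show "x a * pmul G (bas a) (EE y) w = x a * (\<Sum>b\<in>supp y. y b * pmul G (bas a) (?d b) w)" by simp
      qed
      finally show ?thesis .
    qed
    show "(\<Sum>a\<in>supp x. x a * (\<Sum>b\<in>supp y. y b * pmul G (?d a) (bas b) w)) +
          (\<Sum>a\<in>supp x. x a * (\<Sum>b\<in>supp y. y b * pmul G (bas a) (?d b) w)) =
          pmul G (EE x) y w + pmul G x (EE y) w" using E1 E2 by simp
  qed
  finally show ?thesis .
qed

end




lemma isDrs_zero:
  assumes "isDrs G n r s D"
  shows "D (\<lambda>_. 0) = qzero G n"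
proof -
  have sm: "\<forall>c. \<forall>x\<in>PA G. D (\<lambda>p. c * x p) = qsmul G n c (D x)" using assms by (simp add: isDrs_def)
  have "D (\<lambda>p. 0 * (\<lambda>_. 0) p) = qsmul G n 0 (D (\<lambda>_. 0))"
    using sm[rule_format, where c=0 and x="\<lambda>_. 0"] by simp
  then show ?thesis by (simp add: qsmul_def qzero_def)
qed

lemma isDrs_uniq:
  fixes D1 D2 :: "(('v,'e) path \<Rightarrow> 'k::field) \<Rightarrow> ('v,'e,'k) qelem"
  assumes fq: "finite_quiver G" and D1: "isDrs G n r s D1" and D2: "isDrs G n r s D2"
  shows "D1 = D2"
proof (rule ext)
  fix x :: "_ \<Rightarrow> 'k"
  show "D1 x = D2 x"
  proof (cases "x \<in> PA G")
    case False
    then show ?thesis using D1 D2 by (simp add: isDrs_def extensional_def)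
  next
    case x: True
    have add: "\<And>D x y. isDrs G n r s D \<Longrightarrow> x \<in> PA G \<Longrightarrow> y \<in> PA G \<Longrightarrow> D (\<lambda>p. x p + y p) = qadd G n (D x) (D y)"
      by (simp add: isDrs_def)
    have smul: "\<And>D c x. isDrs G n r s D \<Longrightarrow> x \<in> PA G \<Longrightarrow> D (\<lambda>p. c * x p) = qsmul G n c (D x)"
      by (simp add: isDrs_def)
    have mul: "\<And>D x y. isDrs G n r s D \<Longrightarrow> x \<in> PA G \<Longrightarrow> y \<in> PA G \<Longrightarrow>
        D (pmul G x y) = qadd G n (qmul G n (D x) (coset G n y)) (qmul G n (coset G n x) (D y))"
      by (simp add: isDrs_def)
    have bp: "is_path G (v, l) \<Longrightarrow> D1 (bas (v, l)) = D2 (bas (v, l))" for v l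
    proof (induction l arbitrary: v)
      case Nil then show ?case using D1 D2 by (simp add: isDrs_def is_path_def vpath_def)
    next
      case (Cons a l)
      note c = is_path_Cons[OF fq Cons.prems]
      have p1: "is_path G (v,[a])" using c by (auto simp: is_path_def)
      have eq: "bas (v, a # l) = (pmul G (bas (v,[a])) (bas (qtgt G a, l)) :: _ \<Rightarrow> 'k)"
        by (simp add: pmul_bas_bas pend_def pjoin_def)
      have a1: "D1 (bas (v,[a])) = D2 (bas (v,[a]))"
        using D1 D2 c(2,3) unfolding isDrs_def apath_def by (cases "a = r") auto
      show ?case unfolding eq
        using mul[OF D1 bas_PA[OF p1] bas_PA[OF c(1)]] mul[OF D2 bas_PA[OF p1] bas_PA[OF c(1)]]
          a1 Cons.IH[OF c(1)] by simp
    qed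
    have sums: "A \<subseteq> supp x \<Longrightarrow> D1 (\<lambda>p. \<Sum>q\<in>A. x q * bas q p) = D2 (\<lambda>p. \<Sum>q\<in>A. x q * bas q p)" for A
    proof (induction A rule: infinite_finite_induct)
      case (infinite A) then show ?case using isDrs_zero[OF D1] isDrs_zero[OF D2] by simp
    next
      case empty then show ?case using isDrs_zero[OF D1] isDrs_zero[OF D2] by simp
    next
      case (insert a A)
      have ap: "is_path G a" using insert x by (auto simp: PA_def)
      have sA: "(\<lambda>p. \<Sum>q\<in>A. x q * bas q p) \<in> PA G"
        using insert x by (intro sum_PA smul_PA bas_PA) (auto simp: PA_def)
      have sa: "(\<lambda>p. x a * bas a p) \<in> PA G" using ap by (intro smul_PA bas_PA)
      have e: "(\<lambda>p. \<Sum>q\<in>insert a A. x q * bas q p) = (\<lambda>p. (\<lambda>p. x a * bas a p) p + (\<lambda>p. \<Sum>q\<in>A. x q * bas q p) p)"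
        using insert by simp
      show ?case unfolding e
        using add[OF D1 sa sA] add[OF D2 sa sA] smul[OF D1 bas_PA[OF ap]] smul[OF D2 bas_PA[OF ap]]
          bp[of "fst a" "snd a"] ap insert by simp
    qed
    have ex: "x = (\<lambda>p. \<Sum>q\<in>supp x. x q * bas q p)" using x by (intro expand) (auto simp: PA_def)
    have "D1 (\<lambda>p. \<Sum>q\<in>supp x. x q * bas q p) = D2 (\<lambda>p. \<Sum>q\<in>supp x. x q * bas q p)"
      by (rule sums) simp
    then show ?thesis by (simp only: ex[symmetric])
  qed
qed

context
  fixes G :: "('v,'e) quiver" and r :: 'e and s :: "('v,'e) path" and n :: nat
  assumes fq: "finite_quiver G" and rA: "r \<in> arcs G" and sp: "is_path G s"
    and par: "parallel G r s" and sl: "1 \<le> plen s"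
begin

definition Dfun :: "(('v,'e) path \<Rightarrow> 'k::field) \<Rightarrow> ('v,'e,'k) qelem" where
  "Dfun = restrict (\<lambda>x. coset G n (EE G r s x)) (PA G)"

lemma isDrs_Dfun: "isDrs G n r s (Dfun :: _ \<Rightarrow> ('v,'e,'k::field) qelem)"
  unfolding isDrs_def
proof (intro conjI ballI allI impI)
  note EP = EE_PA[OF fq rA sp par sl]
  show "(Dfun :: _ \<Rightarrow> ('v,'e,'k) qelem) \<in> extensional (PA G)" by (simp add: Dfun_def)
  fix x :: "_ \<Rightarrow> 'k" assume x: "x \<in> PA G"
  show "Dfun x \<in> QA G n" using x by (simp add: Dfun_def coset_QA EP)
  fix c
  show "Dfun (\<lambda>p. c * x p) = qsmul G n c (Dfun x)"
    using x by (simp add: Dfun_def smul_PA EE_smul[OF fq rA sp par sl] coset_smul[OF fq] EP)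
next
  note EP = EE_PA[OF fq rA sp par sl]
  fix x y :: "_ \<Rightarrow> 'k" assume x: "x \<in> PA G" and y: "y \<in> PA G"
  show "Dfun (\<lambda>p. x p + y p) = qadd G n (Dfun x) (Dfun y)"
    using x y by (simp add: Dfun_def add_PA EE_add[OF fq rA sp par sl] coset_add[OF fq] EP)
  show "Dfun (pmul G x y) = qadd G n (qmul G n (Dfun x) (coset G n y)) (qmul G n (coset G n x) (Dfun y))"
    using x y by (simp add: Dfun_def pmul_PA EE_leibniz[OF fq rA sp par sl] coset_add[OF fq] EP
        coset_mul[OF fq])
next
  have sV: "qsrc G r \<in> verts G" using fq rA by (auto simp: finite_quiver_def)
  have rp: "is_path G (apath G r)" using sV rA by (auto simp: is_path_def apath_def)
  have pe: "pend G s = qtgt G r" using par by (simp add: parallel_def)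
  have "EE G r s (bas (apath G r)) = (bas s :: _ \<Rightarrow> 'k)"
    using pe by (simp add: EE_bas[OF fq rA sp par sl] apath_def pmul_bas_bas pjoin_def)
  then show "(Dfun :: _ \<Rightarrow> ('v,'e,'k) qelem) (bas (apath G r)) = coset G n (bas s)"
    using rp by (simp add: Dfun_def bas_PA)
next
  fix a assume a: "a \<in> arcs G" "a \<noteq> r"
  have sV: "qsrc G a \<in> verts G" using fq a by (auto simp: finite_quiver_def)
  have ap: "is_path G (apath G a)" using sV a by (auto simp: is_path_def apath_def)
  have "EE G r s (bas (apath G a)) = (\<lambda>_. 0 :: 'k)"
    using a by (simp add: EE_bas[OF fq rA sp par sl] apath_def)
  then show "(Dfun :: _ \<Rightarrow> ('v,'e,'k) qelem) (bas (apath G a)) = qzero G n"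
    using ap by (simp add: Dfun_def bas_PA qzero_def)
next
  fix v assume v: "v \<in> verts G"
  have "EE G r s (bas (vpath v)) = (\<lambda>_. 0 :: 'k)" by (simp add: EE_bas[OF fq rA sp par sl] vpath_def)
  then show "(Dfun :: _ \<Rightarrow> ('v,'e,'k) qelem) (bas (vpath v)) = qzero G n"
    using v by (simp add: Dfun_def bas_PA qzero_def vpath_def is_path_def)
qed

lemma Drs_eq: "Drs G n r s = (Dfun :: _ \<Rightarrow> ('v,'e,'k::field) qelem)"
  unfolding Drs_def
proof (rule the_equality)
  show "isDrs G n r s (Dfun :: _ \<Rightarrow> ('v,'e,'k) qelem)" by (rule isDrs_Dfun)
  fix D :: "_ \<Rightarrow> ('v,'e,'k) qelem" assume "isDrs G n r s D"
  then show "D = Dfun" by (rule isDrs_uniq[OF fq _ isDrs_Dfun])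
qed

lemma Drs_PA: "x \<in> PA G \<Longrightarrow> Drs G n r s x = coset G n (EE G r s (x :: _ \<Rightarrow> 'k::field))"
  by (simp add: Drs_eq Dfun_def)

lemma EE_long:
  fixes x :: "_ \<Rightarrow> 'k::field"
  assumes x: "x \<in> PA G" and z: "\<And>p. plen p < n \<Longrightarrow> x p = 0"
  shows "tr n (EE G r s x) = (\<lambda>_. 0)"
proof
  fix w
  show "tr n (EE G r s x) w = 0"
  proof (cases "plen w < n")
    case True
    have zz: "x p * derl G r s (fst p) (snd p) w = 0" if "p \<in> supp x" for p
    proof (rule ccontr)
      assume "x p * derl G r s (fst p) (snd p) w \<noteq> 0"
      then have nz: "x p \<noteq> 0" "derl G r s (fst p) (snd p) w \<noteq> (0::'k)" by auto
      have "is_path G (fst p, snd p)" using x nz by (auto simp: PA_def supp_def)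
      then have "length (snd p) \<le> plen w" using derl_supp[OF fq rA sp par sl _ nz(2)] by blast
      then have "plen p < n" using True by (simp add: plen_def)
      then show False using z nz by simp
    qed
    have "(\<Sum>p\<in>supp x. x p * derl G r s (fst p) (snd p) w) = 0" by (rule sum.neutral) (use zz in blast)
    then have "EE G r s x w = 0" by (simp add: EE_def[OF fq rA sp par sl])
    then show ?thesis by (simp add: tr_def)
  qed (simp add: tr_def)
qed

lemma Drs_knG:
  assumes x: "(x :: _ \<Rightarrow> 'k::field) \<in> knG G n"
  shows "Drs G n r s x = qzero G n"
proof -
  have xx: "x \<in> PA G" "tr n x = (\<lambda>_. 0)" using x knG_iff[OF fq] by blast+
  have z: "x p = 0" if "plen p < n" for p using fun_cong[OF xx(2), of p] that by (simp add: tr_def)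
  have "tr n (EE G r s x) = (\<lambda>_. 0)"
    by (rule EE_long[OF xx(1) z])
  then have "coset G n (EE G r s x) = coset G n (\<lambda>_. 0)"
    using coset_eq_iff[OF fq EE_PA[OF fq rA sp par sl xx(1)] zero_PA] by simp
  then show ?thesis using Drs_PA[OF xx(1)] by (simp add: qzero_def)
qed

definition ee :: "(('v,'e) path \<Rightarrow> 'k::field) \<Rightarrow> (('v,'e) path \<Rightarrow> 'k)" where
  "ee x = tr n (EE G r s x)"

lemma isder_ee: "isder G n (ee :: _ \<Rightarrow> _ \<Rightarrow> 'k::field)"
  unfolding isder_def
proof (intro conjI ballI allI impI)
  note EP = EE_PA[OF fq rA sp par sl]
  fix x :: "_ \<Rightarrow> 'k" assume x: "x \<in> PA G"
  show "ee x \<in> PA G" using x by (simp add: ee_def tr_PA EP)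
  show "tr n (ee x) = ee x" by (simp add: ee_def)
  fix c show "ee (\<lambda>p. c * x p) = (\<lambda>p. c * ee x p)"
    using x by (simp add: ee_def EE_smul[OF fq rA sp par sl] tr_smul)
next
  note EP = EE_PA[OF fq rA sp par sl]
  fix x y :: "_ \<Rightarrow> 'k" assume x: "x \<in> PA G" and y: "y \<in> PA G"
  show "ee (\<lambda>p. x p + y p) = (\<lambda>p. ee x p + ee y p)"
    using x y by (simp add: ee_def EE_add[OF fq rA sp par sl] tr_add)
  show "ee (pmul G x y) = (\<lambda>p. tr n (pmul G (ee x) y) p + tr n (pmul G x (ee y)) p)"
  proof -
    have f: "finite (supp (EE G r s x))" "finite (supp (EE G r s y))" "finite (supp x)" "finite (supp y)"
      using x y EP by (auto intro: PA_finite)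
    show ?thesis
      using x y f tr_pmul_left[of "EE G r s x" y n G] tr_pmul_right[of x "EE G r s y" n G]
      by (simp add: ee_def EE_leibniz[OF fq rA sp par sl] tr_add)
  qed
  assume t: "tr n x = tr n y"
  have d: "(\<lambda>p. x p - y p) \<in> PA G" using x y by (rule diff_PA)
  have z: "x p - y p = 0" if "plen p < n" for p using fun_cong[OF t, of p] that by (simp add: tr_def)
  have "tr n (EE G r s (\<lambda>p. x p - y p)) = (\<lambda>_. 0)"
    by (rule EE_long[OF d z])
  then show "ee x = ee y"
    by (simp add: ee_def EE_diff[OF fq rA sp par sl x y] tr_diff fun_eq_iff)
qed

lemma Drs_bar_Diff: "(Drs_bar G n r s :: ('v,'e,'k::field) qelem \<Rightarrow> _) \<in> Diff G n"
  and qval_Drs_bar: "X \<in> QA G n \<Longrightarrow> qval n (Drs_bar G n r s X) = ee (qval n (X :: ('v,'e,'k) qelem))"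
proof -
  have v: "qval n (Drs_bar G n r s X) = ee (qval n X)" "Drs_bar G n r s X \<in> QA G n"
    if X: "X \<in> QA G n" for X :: "('v,'e,'k) qelem"
  proof -
    have rX: "rep X \<in> PA G" using rep_PA[OF fq X] .
    have "Drs_bar G n r s X = coset G n (EE G r s (rep X))"
      using X rX by (simp add: Drs_bar_def Drs_PA)
    then have e: "qval n (Drs_bar G n r s X) = ee (rep X)" "Drs_bar G n r s X \<in> QA G n"
      using rX by (simp_all add: qval_coset[OF fq] EE_PA[OF fq rA sp par sl] ee_def coset_QA)
    have "ee (rep X) = ee (qval n X)"
      by (rule isderD(6)[OF isder_ee rX qval_PA[OF fq X]]) (simp add: qval_def)
    then show "qval n (Drs_bar G n r s X) = ee (qval n X)" using e by simp
    show "Drs_bar G n r s X \<in> QA G n" using e by simp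
  qed
  show "(Drs_bar G n r s :: ('v,'e,'k) qelem \<Rightarrow> _) \<in> Diff G n"
  proof (rule isder_Diff[OF fq isder_ee])
    show "(Drs_bar G n r s :: ('v,'e,'k) qelem \<Rightarrow> _) \<in> extensional (QA G n)" by (simp add: Drs_bar_def)
  qed (simp_all add: v)
  show "X \<in> QA G n \<Longrightarrow> qval n (Drs_bar G n r s X) = ee (qval n X)" using v by blast
qed

lemma ee_ev: "ee (ev v) = (\<lambda>_. 0 :: 'k::field)"
  by (simp add: ee_def EE_bas[OF fq rA sp par sl])

lemma ee_arc: "plen s < n \<Longrightarrow> ee (bas (apath G a)) = (if a = r then bas s else (\<lambda>_. 0 :: 'k::field))"
proof -
  assume sn: "plen s < n"
  have pe: "pend G s = qtgt G r" using par by (simp add: parallel_def)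
  show ?thesis using pe sn
    by (simp add: ee_def EE_bas[OF fq rA sp par sl] apath_def pmul_bas_bas pjoin_def tr_bas_short)
qed

end

lemma Dinner_props:
  fixes s :: "('v,'e) path"
  assumes fq: "finite_quiver G" and sp: "is_path G s" and sn: "plen s < n"
  shows "Dinner G n (coset G n (bas s) :: ('v,'e,'k::field) qelem) \<in> Diff G n"
    and "X \<in> QA G n \<Longrightarrow> qval n (Dinner G n (coset G n (bas s)) X) = ii G n s (qval n (X :: ('v,'e,'k) qelem))"
proof -
  let ?S = "coset G n (bas s) :: ('v,'e,'k) qelem"
  have SQ: "?S \<in> QA G n" using sp by (simp add: coset_QA bas_PA)
  have qS: "qval n ?S = bas s" using sp sn by (simp add: qval_coset[OF fq] bas_PA tr_bas_short)
  have v: "qval n (Dinner G n ?S X) = ii G n s (qval n X)" "Dinner G n ?S X \<in> QA G n"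
    if X: "X \<in> QA G n" for X :: "('v,'e,'k) qelem"
  proof -
    have "Dinner G n ?S X = qadd G n (qmul G n ?S X) (qsmul G n (-1) (qmul G n X ?S))"
      using X by (simp add: Dinner_def)
    then show "qval n (Dinner G n ?S X) = ii G n s (qval n X)" "Dinner G n ?S X \<in> QA G n"
      using X SQ qS by (simp_all add: qval_qadd[OF fq] qval_qsmul[OF fq] qval_qmul[OF fq] qmul_QA[OF fq]
          qsmul_QA[OF fq] qadd_QA[OF fq] ii_def)
  qed
  show "Dinner G n ?S \<in> Diff G n"
  proof (rule isder_Diff[OF fq isder_ii[OF sp]])
    show "Dinner G n ?S \<in> extensional (QA G n)" by (simp add: Dinner_def)
  qed (simp_all add: v)
  show "X \<in> QA G n \<Longrightarrow> qval n (Dinner G n ?S X) = ii G n s (qval n X)" using v by blast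
qed

lemma ii_ev:
  "ii G n s (ev w) = (\<lambda>q. (if q = s \<and> plen s < n then (if pend G s = w then 1 else 0) - (if fst s = w then 1 else 0) else 0) :: 'k::field)"
proof -
  have h1: "pmul G (bas s) (ev w) = (if pend G s = w then bas s else (\<lambda>_. 0 :: 'k))"
    by (simp add: pmul_bas_bas pjoin_def)
  have h2: "pmul G (ev w) (bas s) = (if fst s = w then bas s else (\<lambda>_. 0 :: 'k))"
    by (cases s) (auto simp: pmul_bas_bas pjoin_def pend_def)
  show ?thesis unfolding ii_def h1 h2 by (auto simp: tr_def bas_def fun_eq_iff)
qed




lemma pend_verts: "finite_quiver G \<Longrightarrow> is_path G q \<Longrightarrow> pend G q \<in> verts G"
  by (cases q) (auto simp: pend_def is_path_def finite_quiver_def dest!: last_in_set)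

lemma Diff_QA: "\<delta> \<in> Diff G n \<Longrightarrow> X \<in> QA G n \<Longrightarrow> \<delta> X \<in> QA G n"
  by (simp add: Diff_def)

lemma qval_comb:
  fixes S :: "(('v,'e,'k::field) qelem \<Rightarrow> ('v,'e,'k) qelem) set"
  assumes fq: "finite_quiver G" and S: "finite S" "S \<subseteq> Diff G n" and X: "X \<in> QA G n"
  shows "qval n (qsum G n S (\<lambda>D. qsmul G n (c D) (D X))) = (\<lambda>p. \<Sum>D\<in>S. c D * qval n (D X) p)"
proof -
  have "\<And>D. D \<in> S \<Longrightarrow> qsmul G n (c D) (D X) \<in> QA G n"
    using S X Diff_QA qsmul_QA[OF fq] by blast
  then have "qval n (qsum G n S (\<lambda>D. qsmul G n (c D) (D X))) = (\<lambda>p. \<Sum>D\<in>S. qval n (qsmul G n (c D) (D X)) p)"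
    by (rule qval_qsum[OF fq S(1)])
  also have "\<dots> = (\<lambda>p. \<Sum>D\<in>S. c D * qval n (D X) p)"
  proof (rule ext, rule sum.cong[OF refl])
    fix p D assume "D \<in> S"
    then have "D X \<in> QA G n" using S X Diff_QA by blast
    then show "qval n (qsmul G n (c D) (D X)) p = c D * qval n (D X) p" by (simp add: qval_qsmul[OF fq])
  qed
  finally show ?thesis .
qed

lemma comb_QA:
  fixes S :: "(('v,'e,'k::field) qelem \<Rightarrow> ('v,'e,'k) qelem) set"
  assumes fq: "finite_quiver G" and S: "finite S" "S \<subseteq> Diff G n" and X: "X \<in> QA G n"
  shows "qsum G n S (\<lambda>D. qsmul G n (c D) (D X)) \<in> QA G n"
  by (rule qsum_QA[OF fq S(1)]) (use S X Diff_QA qsmul_QA[OF fq] in blast)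

lemma B1_Diff:
  assumes fq: "finite_quiver G" and n: "2 \<le> n"
  shows "(B1 G n :: (('v,'e,'k::field) qelem \<Rightarrow> _) set) \<subseteq> Diff G n"
proof
  fix D :: "('v,'e,'k) qelem \<Rightarrow> _" assume "D \<in> B1 G n"
  then obtain s where s: "D = Dinner G n (coset G n (bas s))" "is_path G s" "plen s \<le> n - 1"
    unfolding B1_def by blast
  have "plen s < n" using s n by simp
  then show "D \<in> Diff G n" using Dinner_props(1)[OF fq s(2)] s(1) by simp
qed

lemma B2_Diff:
  assumes fq: "finite_quiver G"
  shows "(B2 G n :: (('v,'e,'k::field) qelem \<Rightarrow> _) set) \<subseteq> Diff G n"
proof
  fix D :: "('v,'e,'k) qelem \<Rightarrow> _" assume "D \<in> B2 G n"
  then obtain r s where s: "D = Drs_bar G n r s" "r \<in> arcs G" "is_path G s" "1 \<le> plen s" "parallel G r s"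
    unfolding B2_def by blast
  then show "D \<in> Diff G n" using Drs_bar_Diff[OF fq s(2,3,5,4)] by simp
qed

lemma B1_qval:
  assumes fq: "finite_quiver G" and n: "2 \<le> n" and sp: "is_path G s" "plen s \<le> n - 1"
    and X: "X \<in> QA G n"
  shows "qval n (Dinner G n (coset G n (bas s)) X) = ii G n s (qval n (X :: ('v,'e,'k::field) qelem))"
proof -
  have "plen s < n" using sp n by simp
  then show ?thesis using Dinner_props(2)[OF fq sp(1) _ X] by blast
qed

lemma B2_qval:
  assumes fq: "finite_quiver G" and a: "a \<in> arcs G" "is_path G s" "1 \<le> plen s" "parallel G a s"
    and X: "X \<in> QA G n"
  shows "qval n (Drs_bar G n a s X) = ee G a s n (qval n (X :: ('v,'e,'k::field) qelem))"
  by (rule qval_Drs_bar[OF fq a(1,2,4,3) X])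




lemma expansion:
  fixes \<delta> :: "('v,'e,'k::field_char_0) qelem \<Rightarrow> ('v,'e,'k) qelem"
  assumes fq: "finite_quiver G" and n: "2 \<le> n" and D: "\<delta> \<in> Diff G n"
  assumes d_def: "d = (\<lambda>x. qval n (\<delta> (coset G n x)))"
  assumes SP_def: "SP = {p. is_path G p \<and> plen p < n}"
  assumes NC_def: "NC = {s\<in>SP. pend G s \<noteq> fst s}"
  assumes ARS_def: "ARS = {i. fst i \<in> arcs G \<and> snd i \<in> SP \<and> 1 \<le> plen (snd i) \<and> parallel G (fst i) (snd i)}"
  assumes \<alpha>_def: "\<alpha> = (\<lambda>s. d (ev (pend G s)) s)"
  assumes d1_def: "d1 = (\<lambda>x p. d x p - (\<Sum>s\<in>NC. \<alpha> s * ii G n s x p))"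
  assumes \<beta>_def: "\<beta> = (\<lambda>i. d1 (bas (apath G (fst i))) (snd i))"
  shows "finite NC" "finite ARS"
    "\<And>x. x \<in> PA G \<Longrightarrow> d x = (\<lambda>p. (\<Sum>s\<in>NC. \<alpha> s * ii G n s x p) + (\<Sum>i\<in>ARS. \<beta> i * ee G (fst i) (snd i) n x p))"
proof -
  have dd: "isder G n d" unfolding d_def by (rule Diff_isder[OF fq D])
  have fSP: "finite SP" unfolding SP_def by (rule finite_short_paths[OF fq])
  show fNC: "finite NC" unfolding NC_def using fSP by simp
  have fARS: "ARS \<subseteq> arcs G \<times> SP" unfolding ARS_def by (auto simp: mem_Times_iff)
  moreover have "finite (arcs G \<times> SP)" using fq fSP by (simp add: finite_quiver_def)
  ultimately show fA: "finite ARS" by (rule finite_subset)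
  have NCp: "\<And>s. s \<in> NC \<Longrightarrow> is_path G s" unfolding NC_def SP_def by simp
  have d1: "isder G n d1" unfolding d1_def
    by (rule isder_diff[OF dd isder_lin[OF fNC]]) (use NCp isder_ii in blast)
  have V: "d1 (ev w) = (\<lambda>_. 0)" if w: "w \<in> verts G" for w
  proof
    fix q
    have ewP: "ev w \<in> PA G" using w by (rule ev_PA)
    have sumeq: "(\<Sum>s\<in>NC. \<alpha> s * ii G n s (ev w) q) =
       (if q \<in> NC then \<alpha> q * ((if pend G q = w then 1 else 0) - (if fst q = w then 1 else 0)) else 0)"
    proof -
      have "(\<Sum>s\<in>NC. \<alpha> s * ii G n s (ev w) q) =
         (\<Sum>s\<in>NC. if s = q then \<alpha> q * ((if pend G q = w then 1 else 0) - (if fst q = w then 1 else 0)) else 0)"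
        by (rule sum.cong[OF refl]) (auto simp: ii_ev NC_def SP_def)
      also have "\<dots> = (if q \<in> NC then \<alpha> q * ((if pend G q = w then 1 else 0) - (if fst q = w then 1 else 0)) else 0)"
        using fNC by (simp add: sum.delta)
      finally show ?thesis .
    qed
    show "d1 (ev w) q = 0"
    proof (cases "q \<in> SP")
      case False
      then have "q \<notin> NC" by (simp add: NC_def)
      moreover have "d (ev w) q = 0"
      proof (rule ccontr)
        assume nz: "d (ev w) q \<noteq> 0"
        then have "is_path G q" by (rule isder_path[OF dd ewP])
        moreover have "plen q < n" using isder_short[OF dd ewP, of q] nz by (meson not_le)
        ultimately show False using False by (simp add: SP_def)
      qed
      ultimately show ?thesis using sumeq by (simp add: d1_def)
    next
      case qSP: True
      show ?thesis
      proof (cases "pend G q = fst q")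
        case True
        then have "q \<notin> NC" by (simp add: NC_def)
        moreover have "d (ev w) q = 0" using vertex_xor[OF dd w, of q] True by (cases "fst q = w") auto
        ultimately show ?thesis using sumeq by (simp add: d1_def)
      next
        case pf: False
        then have qNC: "q \<in> NC" using qSP by (simp add: NC_def)
        have pV: "pend G q \<in> verts G" using qSP fq by (auto simp: SP_def intro: pend_verts)
        show ?thesis
        proof (cases "pend G q = w")
          case True
          then show ?thesis using sumeq qNC pf by (simp add: d1_def \<alpha>_def)
        next
          case pw: False
          show ?thesis
          proof (cases "fst q = w")
            case True
            have "(if pend G q = pend G q then d (ev w) q else 0) + (if fst q = w then d (ev (pend G q)) q else 0) = 0"
              using vertex_rel[OF dd w pV, of q] pw by simp
            then have "d (ev w) q = - \<alpha> q" using True by (simp add: \<alpha>_def eq_neg_iff_add_eq_0)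
            then show ?thesis using sumeq qNC pw True by (simp add: d1_def)
          next
            case False
            then have "d (ev w) q = 0" using vertex_xor[OF dd w, of q] pw by blast
            then show ?thesis using sumeq qNC pw False by (simp add: d1_def)
          qed
        qed
      qed
    qed
  qed
  define d2 where "d2 = (\<lambda>x p. d1 x p - (\<Sum>i\<in>ARS. \<beta> i * ee G (fst i) (snd i) n x p))"
  have ARSp: "\<And>i. i \<in> ARS \<Longrightarrow> fst i \<in> arcs G \<and> is_path G (snd i) \<and> 1 \<le> plen (snd i) \<and>
      parallel G (fst i) (snd i) \<and> plen (snd i) < n"
    unfolding ARS_def SP_def by blast
  have d2: "isder G n d2" unfolding d2_def
  proof (rule isder_diff[OF d1 isder_lin[OF fA]])
    fix i assume "i \<in> ARS"
    then show "isder G n (ee G (fst i) (snd i) n :: _ \<Rightarrow> _ \<Rightarrow> 'k)"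
      using ARSp by (intro isder_ee[OF fq]) auto
  qed
  have d2v: "d2 (ev w) = (\<lambda>_. 0)" if w: "w \<in> verts G" for w
  proof -
    have "\<And>i. i \<in> ARS \<Longrightarrow> ee G (fst i) (snd i) n (ev w) = (\<lambda>_. 0 :: 'k)"
      using ARSp by (intro ee_ev[OF fq]) auto
    then show ?thesis using V[OF w] by (simp add: d2_def)
  qed
  have d2a: "d2 (bas (apath G b)) = (\<lambda>_. 0)" if b: "b \<in> arcs G" for b
  proof
    fix p
    have "(\<Sum>i\<in>ARS. \<beta> i * ee G (fst i) (snd i) n (bas (apath G b)) p) = (\<Sum>i\<in>ARS. if i = (b, p) then \<beta> (b,p) else 0)"
    proof (rule sum.cong[OF refl])
      fix i assume i: "i \<in> ARS"
      have "ee G (fst i) (snd i) n (bas (apath G b)) = (if b = fst i then bas (snd i) else (\<lambda>_. 0 :: 'k))"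
        using ARSp[OF i] by (intro ee_arc[OF fq]) auto
      then show "\<beta> i * ee G (fst i) (snd i) n (bas (apath G b)) p = (if i = (b, p) then \<beta> (b,p) else 0)"
        by (cases i) (auto simp: bas_def)
    qed
    also have "\<dots> = (if (b,p) \<in> ARS then \<beta> (b,p) else 0)" using fA by (simp add: sum.delta)
    also have "\<dots> = d1 (bas (apath G b)) p"
    proof (cases "d1 (bas (apath G b)) p = 0")
      case True then show ?thesis by (simp add: \<beta>_def)
    next
      case nz: False
      have sV: "qsrc G b \<in> verts G" using fq b by (auto simp: finite_quiver_def)
      have bP: "bas (apath G b) \<in> PA G" using b sV by (intro bas_PA) (auto simp: apath_def is_path_def)
      have par: "fst p = qsrc G b \<and> pend G p = qtgt G b" by (rule arc_parallel[OF fq d1 V b nz])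
      have pp: "is_path G p" by (rule isder_path[OF d1 bP nz])
      have pn: "plen p < n" using isder_short[OF d1 bP, of p] nz by (meson not_le)
      have pl: "1 \<le> plen p"
      proof (rule ccontr)
        assume "\<not> 1 \<le> plen p"
        then have "snd p = []" by (simp add: plen_def Suc_le_eq)
        then have pe: "p = (qsrc G b, [])" "qsrc G b = qtgt G b" using par by (cases p, auto simp: pend_def)+
        have "d1 (bas (qsrc G b, [b])) (qsrc G b, []) = 0"
          by (rule loop_zero[OF fq d1 _ b refl pe(2)[symmetric]]) (use n in simp)
        then show False using nz pe by (simp add: apath_def)
      qed
      have "(b, p) \<in> ARS" using b pp pn pl par by (simp add: ARS_def SP_def parallel_def pstart_def)
      then show ?thesis by (simp add: \<beta>_def)
    qed
    finally show "d2 (bas (apath G b)) p = 0" by (simp add: d2_def)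
  qed
  fix x :: "_ \<Rightarrow> 'k" assume x: "x \<in> PA G"
  have "d2 x = (\<lambda>_. 0)" by (rule isder_unique[OF fq d2 d2v d2a x])
  then show "d x = (\<lambda>p. (\<Sum>s\<in>NC. \<alpha> s * ii G n s x p) + (\<Sum>i\<in>ARS. \<beta> i * ee G (fst i) (snd i) n x p))"
    by (simp add: d2_def d1_def fun_eq_iff algebra_simps)
qed




lemma spanning:
  fixes \<delta> :: "('v,'e,'k::field_char_0) qelem \<Rightarrow> ('v,'e,'k) qelem"
  assumes fq: "finite_quiver G" and n: "2 \<le> n" and D: "\<delta> \<in> Diff G n"
  shows "\<exists>S c. finite S \<and> S \<subseteq> B1 G n \<union> B2 G n \<and>
            (\<forall>X\<in>QA G n. \<delta> X = qsum G n S (\<lambda>D. qsmul G n (c D) (D X)))"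
proof -
  define d where "d = (\<lambda>x. qval n (\<delta> (coset G n x)))"
  define SP where "SP = {p. is_path G p \<and> plen p < n}"
  define NC where "NC = {s\<in>SP. pend G s \<noteq> fst s}"
  define ARS where "ARS = {i. fst i \<in> arcs G \<and> snd i \<in> SP \<and> 1 \<le> plen (snd i) \<and> parallel G (fst i) (snd i)}"
  define \<alpha> where "\<alpha> = (\<lambda>s. d (ev (pend G s)) s)"
  define d1 where "d1 = (\<lambda>x p. d x p - (\<Sum>s\<in>NC. \<alpha> s * ii G n s x p))"
  define \<beta> where "\<beta> = (\<lambda>i. d1 (bas (apath G (fst i))) (snd i))"
  note E = expansion[OF fq n D d_def SP_def NC_def ARS_def \<alpha>_def d1_def \<beta>_def]
  have NCp: "\<And>s. s \<in> NC \<Longrightarrow> is_path G s \<and> plen s < n \<and> pend G s \<noteq> fst s"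
    unfolding NC_def SP_def by blast
  have ARSp: "\<And>i. i \<in> ARS \<Longrightarrow> fst i \<in> arcs G \<and> is_path G (snd i) \<and> 1 \<le> plen (snd i) \<and>
      parallel G (fst i) (snd i) \<and> plen (snd i) < n"
    unfolding ARS_def SP_def by blast
  define I :: "(('v,'e) path + ('e \<times> ('v,'e) path)) set" where "I = Inl ` NC \<union> Inr ` ARS"
  define F :: "_ \<Rightarrow> ('v,'e,'k) qelem \<Rightarrow> ('v,'e,'k) qelem" where
    "F = (\<lambda>i. case i of Inl s \<Rightarrow> Dinner G n (coset G n (bas s)) | Inr j \<Rightarrow> Drs_bar G n (fst j) (snd j))"
  define co where "co = (\<lambda>i. case i of Inl s \<Rightarrow> \<alpha> s | Inr j \<Rightarrow> \<beta> j)"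
  define S where "S = F ` I"
  define c where "c = (\<lambda>D. \<Sum>i\<in>{i\<in>I. F i = D}. co i)"
  have fI: "finite I" unfolding I_def using E(1,2) by simp
  have FB: "F i \<in> B1 G n \<union> B2 G n" if "i \<in> I" for i
  proof (cases i)
    case (Inl s)
    then have "s \<in> NC" using that by (auto simp: I_def)
    then have "is_path G s \<and> plen s \<le> n - 1 \<and> pend G s \<noteq> pstart s" using NCp[of s] by (auto simp: pstart_def)
    then have "\<exists>s'. F i = Dinner G n (coset G n (bas s')) \<and> is_path G s' \<and> plen s' \<le> n - 1 \<and> pend G s' \<noteq> pstart s'"
      using Inl by (intro exI[of _ s]) (simp add: F_def)
    then have "F i \<in> B1 G n" unfolding B1_def by blast
    then show ?thesis by blast
  next
    case (Inr j)
    then have "j \<in> ARS" using that by (auto simp: I_def)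
    then have "fst j \<in> arcs G \<and> is_path G (snd j) \<and> plen (snd j) \<le> n - 1 \<and> 1 \<le> plen (snd j) \<and> parallel G (fst j) (snd j)"
      using ARSp[of j] by auto
    then have "\<exists>r s'. F i = Drs_bar G n r s' \<and> r \<in> arcs G \<and> is_path G s' \<and> plen s' \<le> n - 1 \<and> 1 \<le> plen s' \<and> parallel G r s'"
      using Inr by (intro exI[of _ "fst j"] exI[of _ "snd j"]) (simp add: F_def)
    then have "F i \<in> B2 G n" unfolding B2_def by blast
    then show ?thesis by blast
  qed
  have SB: "S \<subseteq> B1 G n \<union> B2 G n" unfolding S_def using FB by blast
  have SD: "S \<subseteq> Diff G n" using SB B1_Diff[OF fq n] B2_Diff[OF fq] by blast
  have fS: "finite S" unfolding S_def using fI by simp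
  have main: "\<delta> X = qsum G n S (\<lambda>D. qsmul G n (c D) (D X))" if X: "X \<in> QA G n" for X
  proof (rule QA_eq[OF fq, of _ n])
    show "\<delta> X \<in> QA G n" using D X by (rule Diff_QA)
    show "qsum G n S (\<lambda>D. qsmul G n (c D) (D X)) \<in> QA G n" by (rule comb_QA[OF fq fS SD X])
    have qX: "qval n X \<in> PA G" using X by (rule qval_PA[OF fq])
    have "qval n (\<delta> X) = d (qval n X)" using coset_qval[OF fq X] by (simp add: d_def)
    also have "\<dots> = (\<lambda>p. (\<Sum>s\<in>NC. \<alpha> s * ii G n s (qval n X) p) + (\<Sum>i\<in>ARS. \<beta> i * ee G (fst i) (snd i) n (qval n X) p))"
      by (rule E(3)[OF qX])
    also have "\<dots> = (\<lambda>p. \<Sum>D\<in>S. c D * qval n (D X) p)"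
    proof
      fix p
      have Fv: "co i * qval n (F i X) p = (case i of Inl s \<Rightarrow> \<alpha> s * ii G n s (qval n X) p
                  | Inr j \<Rightarrow> \<beta> j * ee G (fst j) (snd j) n (qval n X) p)" if "i \<in> I" for i
      proof (cases i)
        case (Inl s)
        then have "s \<in> NC" using that by (auto simp: I_def)
        then have "is_path G s" "plen s \<le> n - 1" using NCp[of s] by auto
        then show ?thesis using Inl B1_qval[OF fq n _ _ X] by (simp add: F_def co_def)
      next
        case (Inr j)
        then have "j \<in> ARS" using that by (auto simp: I_def)
        then show ?thesis using Inr B2_qval[OF fq _ _ _ _ X] ARSp[of j] by (simp add: F_def co_def)
      qed
      have "(\<Sum>D\<in>S. c D * qval n (D X) p) = (\<Sum>D\<in>F ` I. \<Sum>i\<in>{i\<in>I. F i = D}. co i * qval n (F i X) p)"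
        unfolding S_def c_def by (rule sum.cong[OF refl]) (auto simp: sum_distrib_right)
      also have "\<dots> = (\<Sum>i\<in>I. co i * qval n (F i X) p)"
        by (rule sum.image_gen[symmetric, OF fI])
      also have "\<dots> = (\<Sum>i\<in>I. case i of Inl s \<Rightarrow> \<alpha> s * ii G n s (qval n X) p
                  | Inr j \<Rightarrow> \<beta> j * ee G (fst j) (snd j) n (qval n X) p)"
        by (rule sum.cong[OF refl]) (rule Fv)
      also have "\<dots> = (\<Sum>s\<in>NC. \<alpha> s * ii G n s (qval n X) p) + (\<Sum>i\<in>ARS. \<beta> i * ee G (fst i) (snd i) n (qval n X) p)"
        unfolding I_def using E(1,2)
        by (subst sum.union_disjoint) (auto simp: sum.reindex)
      finally show "(\<Sum>s\<in>NC. \<alpha> s * ii G n s (qval n X) p) + (\<Sum>i\<in>ARS. \<beta> i * ee G (fst i) (snd i) n (qval n X) p)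
          = (\<Sum>D\<in>S. c D * qval n (D X) p)" by simp
    qed
    also have "\<dots> = qval n (qsum G n S (\<lambda>D. qsmul G n (c D) (D X)))"
      by (rule qval_comb[OF fq fS SD X, symmetric])
    finally show "qval n (\<delta> X) = qval n (qsum G n S (\<lambda>D. qsmul G n (c D) (D X)))" .
  qed
  show ?thesis using fS SB main by blast
qed




lemma independence:
  fixes S :: "(('v,'e,'k::field) qelem \<Rightarrow> ('v,'e,'k) qelem) set"
  assumes fq: "finite_quiver G" and n: "2 \<le> n" and fS: "finite S" and SB: "S \<subseteq> B1 G n \<union> B2 G n"
    and Z: "\<forall>X\<in>QA G n. qsum G n S (\<lambda>D. qsmul G n (c D) (D X)) = qzero G n"
  shows "\<forall>D\<in>S. c D = 0"
proof -
  have SD: "S \<subseteq> Diff G n" using SB B1_Diff[OF fq n] B2_Diff[OF fq] by blast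
  have Z': "(\<Sum>D\<in>S. c D * qval n (D X) p) = 0" if X: "X \<in> QA G n" for X p
  proof -
    have "qval n (qsum G n S (\<lambda>D. qsmul G n (c D) (D X))) = (\<lambda>_. 0)"
      using Z X by (simp add: qval_qzero[OF fq])
    then have "(\<lambda>p. \<Sum>D\<in>S. c D * qval n (D X) p) = (\<lambda>_. 0)" using qval_comb[OF fq fS SD X, of c] by simp
    then show ?thesis by (rule fun_cong[where x=p, THEN trans]) simp
  qed
  have step1: "c D = 0" if DS: "D \<in> S" and DB: "D \<in> B1 G n" for D
  proof -
    obtain s0 where s0: "D = Dinner G n (coset G n (bas s0))" "is_path G s0" "plen s0 \<le> n - 1" "pend G s0 \<noteq> pstart s0"
      using DB unfolding B1_def by blast
    define w0 where "w0 = pend G s0"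
    have w0V: "w0 \<in> verts G" unfolding w0_def using s0(2) by (rule pend_verts[OF fq])
    define X0 :: "('v,'e,'k) qelem" where "X0 = coset G n (ev w0)"
    have X0: "X0 \<in> QA G n" unfolding X0_def using w0V by (intro coset_QA ev_PA)
    have qX0: "qval n X0 = ev w0" unfolding X0_def using w0V n
      by (simp add: qval_coset[OF fq] ev_PA tr_bas_short plen_def)
    have v1: "qval n (Dinner G n (coset G n (bas s')) X0) s0 = (if s' = s0 then 1 else 0)"
      if "is_path G s'" "plen s' \<le> n - 1" for s'
    proof -
      have "qval n (Dinner G n (coset G n (bas s')) X0) s0 = ii G n s' (ev w0) s0"
        using B1_qval[OF fq n that X0] qX0 by simp
      then show ?thesis using s0(3,4) that(2) n by (auto simp: ii_ev w0_def pstart_def)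
    qed
    have v2: "qval n (D' X0) = (\<lambda>_. 0)" if D'B: "D' \<in> B2 G n" for D'
    proof -
      obtain r s where rs: "D' = Drs_bar G n r s" "r \<in> arcs G" "is_path G s" "1 \<le> plen s" "parallel G r s"
        using D'B unfolding B2_def by blast
      show ?thesis using B2_qval[OF fq rs(2-5) X0] qX0 ee_ev[OF fq rs(2,3,5,4)] rs(1) by simp
    qed
    have vD: "qval n (D X0) s0 = 1" using v1[OF s0(2,3)] s0(1) by simp
    have vv: "c D' * qval n (D' X0) s0 = (if D' = D then c D else 0)" if "D' \<in> S" for D'
    proof (cases "D' = D")
      case True then show ?thesis using vD by simp
    next
      case False
      have "qval n (D' X0) s0 = 0"
      proof (cases "D' \<in> B2 G n")
        case True then show ?thesis using v2 by simp
      next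
        case False
        then have "D' \<in> B1 G n" using that SB by blast
        then obtain s' where s': "D' = Dinner G n (coset G n (bas s'))" "is_path G s'" "plen s' \<le> n - 1"
          unfolding B1_def by blast
        show ?thesis
        proof (cases "s' = s0")
          case True then have "D' = D" using s' s0 by simp
          then show ?thesis using \<open>D' \<noteq> D\<close> by simp
        next
          case False then show ?thesis using v1[OF s'(2,3)] s'(1) by simp
        qed
      qed
      then show ?thesis using False by simp
    qed
    have "(\<Sum>D'\<in>S. c D' * qval n (D' X0) p) = 0" for p using Z'[OF X0] .
    then have "(\<Sum>D'\<in>S. c D' * qval n (D' X0) s0) = 0" .
    also have "(\<Sum>D'\<in>S. c D' * qval n (D' X0) s0) = (\<Sum>D'\<in>S. if D' = D then c D else 0)"
      by (rule sum.cong[OF refl]) (rule vv)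
    also have "\<dots> = c D" using fS DS by (simp add: sum.delta)
    finally show "c D = 0" by simp
  qed
  show ?thesis
  proof
    fix D assume DS: "D \<in> S"
    show "c D = 0"
    proof (cases "D \<in> B1 G n")
      case True then show ?thesis using step1 DS by blast
    next
      case nB1: False
      then have "D \<in> B2 G n" using DS SB by blast
      then obtain r0 s0 where rs: "D = Drs_bar G n r0 s0" "r0 \<in> arcs G" "is_path G s0" "plen s0 \<le> n - 1"
        "1 \<le> plen s0" "parallel G r0 s0"
        unfolding B2_def by blast
      have sV: "qsrc G r0 \<in> verts G" using fq rs(2) by (auto simp: finite_quiver_def)
      have rP: "is_path G (apath G r0)" using sV rs(2) by (auto simp: apath_def is_path_def)
      define X0 :: "('v,'e,'k) qelem" where "X0 = coset G n (bas (apath G r0))"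
      have X0: "X0 \<in> QA G n" unfolding X0_def using rP by (intro coset_QA bas_PA)
      have qX0: "qval n X0 = bas (apath G r0)" unfolding X0_def using rP n
        by (simp add: qval_coset[OF fq] bas_PA tr_bas_short plen_def apath_def)
      have v2: "qval n (Drs_bar G n a s' X0) s0 = (if a = r0 \<and> s' = s0 then 1 else 0)"
        if "a \<in> arcs G" "is_path G s'" "1 \<le> plen s'" "parallel G a s'" "plen s' \<le> n - 1" for a s'
      proof -
        have "plen s' < n" using that(5) n by simp
        then have "ee G a s' n (bas (apath G r0)) = (if r0 = a then bas s' else (\<lambda>_. 0 :: 'k))"
          using ee_arc[OF fq that(1,2,4,3)] by blast
        then show ?thesis using B2_qval[OF fq that(1-4) X0] qX0 by (auto simp: bas_def)
      qed
      have vD: "qval n (D X0) s0 = 1" using v2[OF rs(2,3,5,6,4)] rs(1) by simp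
      have vv: "c D' * qval n (D' X0) s0 = (if D' = D then c D else 0)" if "D' \<in> S" for D'
      proof (cases "D' = D")
        case True then show ?thesis using vD by simp
      next
        case False
        show ?thesis
        proof (cases "D' \<in> B1 G n")
          case True then show ?thesis using step1[OF that] False by simp
        next
          case nB: False
          then have "D' \<in> B2 G n" using that SB by blast
          then obtain a s' where as: "D' = Drs_bar G n a s'" "a \<in> arcs G" "is_path G s'" "plen s' \<le> n - 1"
            "1 \<le> plen s'" "parallel G a s'"
            unfolding B2_def by blast
          have "qval n (D' X0) s0 = 0"
          proof (cases "a = r0 \<and> s' = s0")
            case True then have "D' = D" using as rs by simp
            then show ?thesis using False by simp
          next
            case nf: False then show ?thesis using v2[OF as(2,3,5,6,4)] as(1) by simp
          qed
          then show ?thesis using False by simp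
        qed
      qed
      have "(\<Sum>D'\<in>S. c D' * qval n (D' X0) s0) = 0" using Z'[OF X0] .
      also have "(\<Sum>D'\<in>S. c D' * qval n (D' X0) s0) = (\<Sum>D'\<in>S. if D' = D then c D else 0)"
        by (rule sum.cong[OF refl]) (rule vv)
      also have "\<dots> = c D" using fS DS by (simp add: sum.delta)
      finally show "c D = 0" by simp
    qed
  qed
qed

theorem proposition4p8:
  fixes G :: "('v,'e) quiver" and n :: nat
  assumes "finite_quiver G" and "connected_quiver G" and "n \<ge> 2"
  shows "(\<forall>r s. r \<in> arcs G \<and> is_path G s \<and> plen s \<le> n - 1 \<and> 1 \<le> plen s \<and> parallel G r s
             \<longrightarrow> (\<forall>x \<in> (knG G n :: (('v,'e) path \<Rightarrow> 'k::field_char_0) set).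
                    Drs G n r s x = qzero G n))
         \<and> is_Diff_basis G n (B1 G n \<union> (B2 G n :: (('v,'e,'k) qelem \<Rightarrow> ('v,'e,'k) qelem) set))"
proof
  note fq = assms(1) and n = assms(3)
  show "\<forall>r s. r \<in> arcs G \<and> is_path G s \<and> plen s \<le> n - 1 \<and> 1 \<le> plen s \<and> parallel G r s
             \<longrightarrow> (\<forall>x \<in> (knG G n :: (('v,'e) path \<Rightarrow> 'k::field_char_0) set).
                    Drs G n r s x = qzero G n)"
  proof (intro allI impI ballI)
    fix r s and x :: "_ \<Rightarrow> 'k"
    assume h: "r \<in> arcs G \<and> is_path G s \<and> plen s \<le> n - 1 \<and> 1 \<le> plen s \<and> parallel G r s"
      and x: "x \<in> knG G n"
    show "Drs G n r s x = qzero G n"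
      by (rule Drs_knG[OF fq _ _ _ _ x]) (use h in auto)
  qed
  show "is_Diff_basis G n (B1 G n \<union> (B2 G n :: (('v,'e,'k) qelem \<Rightarrow> ('v,'e,'k) qelem) set))"
    unfolding is_Diff_basis_def
  proof (intro conjI)
    show "B1 G n \<union> (B2 G n :: (('v,'e,'k) qelem \<Rightarrow> ('v,'e,'k) qelem) set) \<subseteq> Diff G n"
      using B1_Diff[OF fq n] B2_Diff[OF fq] by blast
    show "\<forall>\<delta>\<in>(Diff G n :: (('v,'e,'k) qelem \<Rightarrow> ('v,'e,'k) qelem) set). \<exists>S c. finite S \<and> S \<subseteq> B1 G n \<union> B2 G n \<and>
         (\<forall>X\<in>QA G n. \<delta> X = qsum G n S (\<lambda>D. qsmul G n (c D) (D X)))"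
    proof
      fix \<delta> :: "('v,'e,'k) qelem \<Rightarrow> ('v,'e,'k) qelem" assume "\<delta> \<in> Diff G n"
      then show "\<exists>S c. finite S \<and> S \<subseteq> B1 G n \<union> B2 G n \<and>
         (\<forall>X\<in>QA G n. \<delta> X = qsum G n S (\<lambda>D. qsmul G n (c D) (D X)))"
        by (rule spanning[OF fq n])
    qed
    show "\<forall>S c. finite S \<and> S \<subseteq> B1 G n \<union> (B2 G n :: (('v,'e,'k) qelem \<Rightarrow> ('v,'e,'k) qelem) set) \<and>
         (\<forall>X\<in>QA G n. qsum G n S (\<lambda>D. qsmul G n (c D) (D X)) = qzero G n)
         \<longrightarrow> (\<forall>D\<in>S. c D = 0)"
    proof (intro allI impI)
      fix S :: "(('v,'e,'k) qelem \<Rightarrow> ('v,'e,'k) qelem) set" and c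
      assume h: "finite S \<and> S \<subseteq> B1 G n \<union> B2 G n \<and>
         (\<forall>X\<in>QA G n. qsum G n S (\<lambda>D. qsmul G n (c D) (D X)) = qzero G n)"
      show "\<forall>D\<in>S. c D = 0" by (rule independence[OF fq n]) (use h in auto)
    qed
  qed
qed



end
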